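(* Let $g,g^*$ be two flat Riemannian metrics on $\mathrm{SPD}_n$ with Levi-Civita connections $\nabla,\nabla^*$ and (path-independent) parallel transports $\Pi,\Pi^*$. Define the balanced bilinear form $g^0_\Sigma(X,Y)=\mathrm{tr}\big((\Pi_{\Sigma\to I_n}X)(\Pi^*_{\Sigma\to I_n}Y)\big)$ for $\Sigma\in\mathrm{SPD}_n$, $X,Y\in T_\Sigma\mathrm{SPD}_n$. If $g^0$ is a Riemannian metric (symmetric and positive definite at every point), then $(\mathrm{SPD}_n,g^0,\nabla,\nabla^* )$ is a dually flat manifold.
   Context: $\mathrm{SPD}_n$ is the manifold of $n\times n$ symmetric positive definite matrices; all tangent spaces are identified with the space $\mathrm{Sym}_n$ of symmetric matrices, in particular $T_{I_n}\mathrm{SPD}_n=\mathrm{Sym}_n$. For a flat metric on $\mathrm{SPD}_n$, parallel transport of its Levi-Civita connection between two points does not depend on the curve. Two connections $\nabla,\nabla^*$ are dual with respect to a metric $h$ if $X(h(Y,Z))=h(\nabla_XY,Z)+h(Y,\nabla^*_XZ)$ for all vector fields $X,Y,Z$. A quadruple $(\mathcal{M},h,\nabla,\nabla^* )$ is a dually flat manifold if $\nabla,\nabla^*$ are dual with respect to $h$ and $\nabla$ is flat (torsion-free with zero curvature); then $\nabla^*$ is flat too. *)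

theory Defs
  imports "HOL-Analysis.Analysis"
begin

text \<open>Matrices are real^'n^'n. Sym_n is a subset of this space, SPD_n an open
  subset of Sym_n; all tangent spaces are identified with Sym_n.\<close>

type_synonym 'n mat = "real^'n^'n"

definition Sym :: "'n::finite mat set" where
  "Sym = {A. transpose A = A}"

definition SPD :: "'n::finite mat set" where
  "SPD = {A. transpose A = A \<and> (\<forall>x. x \<noteq> 0 \<longrightarrow> x \<bullet> (A *v x) > 0)}"

definition dd :: "('n::finite mat \<Rightarrow> 'b::real_normed_vector) \<Rightarrow> 'n mat \<Rightarrow> 'n mat \<Rightarrow> 'b" where
  "dd f x v = vector_derivative (\<lambda>t. f (x + t *\<^sub>R v)) (at 0)"

fun iter_dd :: "'n::finite mat list \<Rightarrow> ('n mat \<Rightarrow> 'b::real_normed_vector) \<Rightarrow> ('n mat \<Rightarrow> 'b)" where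
  "iter_dd [] f = f"
| "iter_dd (v # vs) f = (\<lambda>x. dd (iter_dd vs f) x v)"

definition smooth_SPD :: "('n::finite mat \<Rightarrow> 'b::real_normed_vector) \<Rightarrow> bool" where
  "smooth_SPD f \<longleftrightarrow> (\<forall>vs. set vs \<subseteq> Sym \<longrightarrow>
      continuous_on SPD (iter_dd vs f) \<and>
      (\<forall>v\<in>Sym. \<forall>x\<in>SPD. (\<lambda>t. iter_dd vs f (x + t *\<^sub>R v)) differentiable (at 0)))"

definition vfield :: "('n::finite mat \<Rightarrow> 'n mat) \<Rightarrow> bool" where
  "vfield X \<longleftrightarrow> smooth_SPD X \<and> (\<forall>S\<in>SPD. X S \<in> Sym)"

definition lie :: "('n::finite mat \<Rightarrow> 'n mat) \<Rightarrow> ('n mat \<Rightarrow> 'n mat) \<Rightarrow> 'n mat \<Rightarrow> 'n mat" where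
  "lie X Y S = dd Y S (X S) - dd X S (Y S)"

definition bilinear_on_Sym :: "('n::finite mat \<Rightarrow> 'n mat \<Rightarrow> 'b::real_vector) \<Rightarrow> bool" where
  "bilinear_on_Sym B \<longleftrightarrow>
     (\<forall>A A' C. \<forall>a::real. A \<in> Sym \<and> A' \<in> Sym \<and> C \<in> Sym \<longrightarrow>
        B (a *\<^sub>R A + A') C = a *\<^sub>R B A C + B A' C \<and>
        B C (a *\<^sub>R A + A') = a *\<^sub>R B C A + B C A')"

definition riemannian_metric :: "('n::finite mat \<Rightarrow> 'n mat \<Rightarrow> 'n mat \<Rightarrow> real) \<Rightarrow> bool" where
  "riemannian_metric g \<longleftrightarrow>
     (\<forall>S\<in>SPD. bilinear_on_Sym (g S)
        \<and> (\<forall>X\<in>Sym. \<forall>Y\<in>Sym. g S X Y = g S Y X)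
        \<and> (\<forall>X\<in>Sym. X \<noteq> 0 \<longrightarrow> g S X X > 0))
     \<and> (\<forall>X\<in>Sym. \<forall>Y\<in>Sym. smooth_SPD (\<lambda>S. g S X Y))"

text \<open>An affine connection on SPD_n is given (in the global chart) by its Christoffel map
  Gamma: nabla_X Y = DY[X] + Gamma(X,Y), with Gamma smooth and bilinear, Sym-valued.\<close>
definition connection :: "('n::finite mat \<Rightarrow> 'n mat \<Rightarrow> 'n mat \<Rightarrow> 'n mat) \<Rightarrow> bool" where
  "connection \<Gamma> \<longleftrightarrow>
     (\<forall>S\<in>SPD. bilinear_on_Sym (\<Gamma> S) \<and> (\<forall>X\<in>Sym. \<forall>Y\<in>Sym. \<Gamma> S X Y \<in> Sym))
     \<and> (\<forall>X\<in>Sym. \<forall>Y\<in>Sym. smooth_SPD (\<lambda>S. \<Gamma> S X Y))"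

definition cov :: "('n::finite mat \<Rightarrow> 'n mat \<Rightarrow> 'n mat \<Rightarrow> 'n mat) \<Rightarrow>
    ('n mat \<Rightarrow> 'n mat) \<Rightarrow> ('n mat \<Rightarrow> 'n mat) \<Rightarrow> 'n mat \<Rightarrow> 'n mat" where
  "cov \<Gamma> X Y S = dd Y S (X S) + \<Gamma> S (X S) (Y S)"

definition torsion_free :: "('n::finite mat \<Rightarrow> 'n mat \<Rightarrow> 'n mat \<Rightarrow> 'n mat) \<Rightarrow> bool" where
  "torsion_free \<Gamma> \<longleftrightarrow> (\<forall>X Y. vfield X \<and> vfield Y \<longrightarrow>
     (\<forall>S\<in>SPD. cov \<Gamma> X Y S - cov \<Gamma> Y X S - lie X Y S = 0))"

definition curvature_free :: "('n::finite mat \<Rightarrow> 'n mat \<Rightarrow> 'n mat \<Rightarrow> 'n mat) \<Rightarrow> bool" where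
  "curvature_free \<Gamma> \<longleftrightarrow> (\<forall>X Y Z. vfield X \<and> vfield Y \<and> vfield Z \<longrightarrow>
     (\<forall>S\<in>SPD. cov \<Gamma> X (cov \<Gamma> Y Z) S - cov \<Gamma> Y (cov \<Gamma> X Z) S - cov \<Gamma> (lie X Y) Z S = 0))"

definition flat :: "('n::finite mat \<Rightarrow> 'n mat \<Rightarrow> 'n mat \<Rightarrow> 'n mat) \<Rightarrow> bool" where
  "flat \<Gamma> \<longleftrightarrow> connection \<Gamma> \<and> torsion_free \<Gamma> \<and> curvature_free \<Gamma>"

definition dual :: "('n::finite mat \<Rightarrow> 'n mat \<Rightarrow> 'n mat \<Rightarrow> real) \<Rightarrow>
    ('n mat \<Rightarrow> 'n mat \<Rightarrow> 'n mat \<Rightarrow> 'n mat) \<Rightarrow> ('n mat \<Rightarrow> 'n mat \<Rightarrow> 'n mat \<Rightarrow> 'n mat) \<Rightarrow> bool" where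
  "dual h \<Gamma> \<Gamma>' \<longleftrightarrow> (\<forall>X Y Z. vfield X \<and> vfield Y \<and> vfield Z \<longrightarrow>
     (\<forall>S\<in>SPD. dd (\<lambda>T. h T (Y T) (Z T)) S (X S)
        = h S (cov \<Gamma> X Y S) (Z S) + h S (Y S) (cov \<Gamma>' X Z S)))"

definition levi_civita :: "('n::finite mat \<Rightarrow> 'n mat \<Rightarrow> 'n mat \<Rightarrow> real) \<Rightarrow>
    ('n mat \<Rightarrow> 'n mat \<Rightarrow> 'n mat \<Rightarrow> 'n mat) \<Rightarrow> bool" where
  "levi_civita g \<Gamma> \<longleftrightarrow> connection \<Gamma> \<and> torsion_free \<Gamma> \<and> dual g \<Gamma> \<Gamma>"

definition flat_metric :: "('n::finite mat \<Rightarrow> 'n mat \<Rightarrow> 'n mat \<Rightarrow> real) \<Rightarrow> bool" where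
  "flat_metric g \<longleftrightarrow> riemannian_metric g \<and> (\<forall>\<Gamma>. levi_civita g \<Gamma> \<longrightarrow> flat \<Gamma>)"

text \<open>Parallel transport of X from S to I_n for the connection Gamma, along the segment
  c(t) = S + t (I - S); for a flat connection the result is independent of the curve.\<close>
definition ptrans_to_id :: "('n::finite mat \<Rightarrow> 'n mat \<Rightarrow> 'n mat \<Rightarrow> 'n mat) \<Rightarrow> 'n mat \<Rightarrow> 'n mat \<Rightarrow> 'n mat" where
  "ptrans_to_id \<Gamma> S X = (THE W. \<exists>V. V 0 = X \<and> V 1 = W \<and>
      (\<forall>t\<in>{0..1}. V t \<in> Sym \<and>
         (V has_vector_derivative (- \<Gamma> (S + t *\<^sub>R (mat 1 - S)) (mat 1 - S) (V t))) (at t within {0..1})))"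

definition balanced :: "('n::finite mat \<Rightarrow> 'n mat \<Rightarrow> 'n mat \<Rightarrow> 'n mat) \<Rightarrow>
    ('n mat \<Rightarrow> 'n mat \<Rightarrow> 'n mat \<Rightarrow> 'n mat) \<Rightarrow> 'n mat \<Rightarrow> 'n mat \<Rightarrow> 'n mat \<Rightarrow> real" where
  "balanced \<Gamma> \<Gamma>' S X Y = trace (ptrans_to_id \<Gamma> S X ** ptrans_to_id \<Gamma>' S Y)"

definition dually_flat :: "('n::finite mat \<Rightarrow> 'n mat \<Rightarrow> 'n mat \<Rightarrow> real) \<Rightarrow>
    ('n mat \<Rightarrow> 'n mat \<Rightarrow> 'n mat \<Rightarrow> 'n mat) \<Rightarrow> ('n mat \<Rightarrow> 'n mat \<Rightarrow> 'n mat \<Rightarrow> 'n mat) \<Rightarrow> bool" where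
  "dually_flat h \<Gamma> \<Gamma>' \<longleftrightarrow> dual h \<Gamma> \<Gamma>' \<and> flat \<Gamma>"

end

theory Submission
  imports Defs
begin


lemma energy:
  fixes E E' :: "real \<Rightarrow> 'a::real_inner"
  assumes der: "\<And>t. t \<in> {0..1} \<Longrightarrow> (E has_vector_derivative E' t) (at t within {0..1})"
  and bnd: "\<And>t. t \<in> {0..1} \<Longrightarrow> norm (E' t) \<le> M * norm (E t) + r"
  and M: "M \<ge> 0" and r: "r \<ge> 0" and t: "t \<in> {0..1}"
  shows "norm (E t) \<le> (norm (E 0) + r) * exp (M + 1)"
proof -
  define K where "K = 2*M+1"
  define h where "h x = exp (-K*x) * (E x \<bullet> E x + r^2)" for x
  define h' where "h' x = exp (-K*x) * (2 * (E x \<bullet> E' x)) + (-K * exp (-K*x)) * (E x \<bullet> E x + r^2)" for x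
  have hd: "(h has_real_derivative h' x) (at x within {0..t})" if "x \<in> {0..t}" for x
  proof -
    have x1: "x \<in> {0..1}" using that t by auto
    have d1: "(E has_vector_derivative E' x) (at x within {0..t})"
      using der[OF x1] by (rule has_vector_derivative_within_subset) (use t in auto)
    have d2: "((\<lambda>x. E x \<bullet> E x) has_real_derivative 2 * (E x \<bullet> E' x)) (at x within {0..t})"
      unfolding has_real_derivative_iff_has_vector_derivative
      using bounded_bilinear.has_vector_derivative[OF bounded_bilinear_inner d1 d1]
      by (simp add: inner_commute)
    show ?thesis unfolding h_def h'_def
      by (auto intro!: derivative_eq_intros d2)
  qed
  have hneg: "h' x \<le> 0" if "x \<in> {0..t}" for x
  proof -
    have x1: "x \<in> {0..1}" using that t by auto
    have "2 * (E x \<bullet> E' x) \<le> 2 * (norm (E x) * norm (E' x))"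
      using Cauchy_Schwarz_ineq2[of "E x" "E' x"] by auto
    also have "\<dots> \<le> 2 * (norm (E x) * (M * norm (E x) + r))"
      using bnd[OF x1] by (intro mult_left_mono) auto
    also have "\<dots> = 2*M*(norm (E x))^2 + 2*r*norm (E x)" by (simp add: algebra_simps power2_eq_square)
    also have "\<dots> \<le> 2*M*(norm (E x))^2 + (norm (E x))^2 + r^2"
      using sum_squares_bound[of r "norm (E x)"] by (simp add: power2_eq_square algebra_simps)
    finally have "2 * (E x \<bullet> E' x) \<le> K * (E x \<bullet> E x) + r^2"
      by (simp add: K_def power2_norm_eq_inner algebra_simps)
    then have "2 * (E x \<bullet> E' x) - K * (E x \<bullet> E x + r^2) \<le> 0"
      using r M by (simp add: K_def algebra_simps) (smt (verit) mult_nonneg_nonneg zero_le_power2)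
    then have "exp (-K*x) * (2 * (E x \<bullet> E' x) - K * (E x \<bullet> E x + r^2)) \<le> 0"
      by (simp add: mult_nonneg_nonpos)
    then show ?thesis by (simp add: h'_def algebra_simps)
  qed
  have t0: "0 \<le> t" using t by auto
  obtain \<xi> where "\<xi> \<in> {0..t}" "h t - h 0 = h' \<xi> * (t - 0)"
    using mvt_very_simple[of 0 t h "\<lambda>x. (*) (h' x)", OF t0] hd
    unfolding has_field_derivative_def by (auto simp: mult.commute)
  then have "h t \<le> h 0" using hneg[of \<xi>] t0 mult_nonpos_nonneg[of "h' \<xi>" t] by auto
  then have "exp (-K*t) * ((norm (E t))^2 + r^2) \<le> (norm (E 0))^2 + r^2"
    by (simp add: h_def power2_norm_eq_inner)
  then have "(norm (E t))^2 + r^2 \<le> exp (K*t) * ((norm (E 0))^2 + r^2)"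
    by (simp add: exp_minus field_simps)
  also have "\<dots> \<le> exp (K) * ((norm (E 0))^2 + r^2)"
    using t M by (intro mult_right_mono) (auto simp: K_def)
  also have "\<dots> \<le> exp (2*(M+1)) * (norm (E 0) + r)^2"
    using r M by (intro mult_mono) (auto simp: K_def power2_eq_square algebra_simps)
  also have "\<dots> = ((norm (E 0) + r) * exp (M + 1))^2"
    by (simp add: power2_eq_square exp_add[symmetric] algebra_simps)
  finally have "(norm (E t))^2 \<le> ((norm (E 0) + r) * exp (M + 1))^2"
    by (smt (verit) zero_le_power2)
  then show ?thesis
    by (rule power2_le_imp_le) (use r in auto)
qed



lemma lin_expand:
  fixes f :: "'a::euclidean_space \<Rightarrow> 'b::real_vector"
  assumes "linear f" shows "f x = (\<Sum>i\<in>Basis. (x \<bullet> i) *\<^sub>R f i)"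
proof -
  have "f x = f (\<Sum>i\<in>Basis. (x \<bullet> i) *\<^sub>R i)" by (simp add: euclidean_representation)
  also have "\<dots> = (\<Sum>i\<in>Basis. (x \<bullet> i) *\<^sub>R f i)"
    by (simp add: linear_sum[OF assms] linear_scale[OF assms] o_def)
  finally show ?thesis .
qed

lemma lin_bound_basis:
  fixes f :: "'a::euclidean_space \<Rightarrow> 'b::real_normed_vector"
  assumes "linear f" shows "norm (f x) \<le> (\<Sum>i\<in>Basis. norm (f i)) * norm x"
proof -
  have "norm (f x) \<le> (\<Sum>i\<in>Basis. norm ((x \<bullet> i) *\<^sub>R f i))"
    by (subst lin_expand[OF assms]) (rule norm_sum)
  also have "\<dots> \<le> (\<Sum>i\<in>Basis. norm (f i) * norm x)"
  proof (intro sum_mono)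
    fix i :: 'a assume "i \<in> Basis"
    then show "norm ((x \<bullet> i) *\<^sub>R f i) \<le> norm (f i) * norm x"
      using Basis_le_norm[of i x] by (simp add: mult.commute) (metis mult.commute mult_left_mono norm_ge_zero)
  qed
  finally show ?thesis by (simp add: sum_distrib_right)
qed

lemma cont_apply_lin:
  fixes a :: "real \<Rightarrow> 'a::euclidean_space \<Rightarrow> 'b::real_normed_vector"
  assumes lin: "\<And>t. t \<in> S \<Longrightarrow> linear (a t)"
  and cont: "\<And>x. continuous_on S (\<lambda>t. a t x)"
  and V: "continuous_on S V"
  shows "continuous_on S (\<lambda>t. a t (V t))"
proof -
  have "continuous_on S (\<lambda>t. \<Sum>i\<in>Basis. (V t \<bullet> i) *\<^sub>R a t i)"
    by (intro continuous_intros V cont)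
  then show ?thesis
    by (rule continuous_on_cong[THEN iffD1, rotated 2]) (auto simp: lin_expand[OF lin])
qed

lemma lin_bound_unif:
  fixes a :: "real \<Rightarrow> 'a::euclidean_space \<Rightarrow> 'b::real_normed_vector"
  assumes lin: "\<And>t. t \<in> S \<Longrightarrow> linear (a t)"
  and cont: "\<And>x. continuous_on S (\<lambda>t. a t x)" and "compact S"
  shows "\<exists>M\<ge>0. \<forall>t\<in>S. \<forall>x. norm (a t x) \<le> M * norm x"
proof -
  have "\<exists>B. \<forall>t\<in>S. norm (a t i) \<le> B" for i
  proof -
    have "bounded ((\<lambda>t. a t i) ` S)"
      by (intro compact_imp_bounded compact_continuous_image cont assms)
    then show ?thesis by (auto simp: bounded_iff)
  qed
  then obtain B where B: "\<And>i t. t \<in> S \<Longrightarrow> norm (a t i) \<le> B i" by metis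
  define M where "M = (\<Sum>i\<in>Basis. \<bar>B i\<bar>)"
  have "norm (a t x) \<le> M * norm x" if "t \<in> S" for t x
  proof -
    have "norm (a t x) \<le> (\<Sum>i\<in>Basis. norm (a t i)) * norm x" by (rule lin_bound_basis[OF lin[OF that]])
    also have "\<dots> \<le> M * norm x"
      unfolding M_def by (intro mult_right_mono sum_mono) (auto intro: order_trans[OF B[OF that]])
    finally show ?thesis .
  qed
  moreover have "M \<ge> 0" unfolding M_def by (simp add: sum_nonneg)
  ultimately show ?thesis by blast
qed

primrec picard :: "(real \<Rightarrow> 'a \<Rightarrow> 'a) \<Rightarrow> (real \<Rightarrow> 'a) \<Rightarrow> 'a \<Rightarrow> nat \<Rightarrow> real \<Rightarrow> 'a::euclidean_space" where
  "picard a b V0 0 = (\<lambda>t. V0)"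
| "picard a b V0 (Suc k) = (\<lambda>t. V0 + integral {0..t} (\<lambda>r. a r (picard a b V0 k r) + b r))"

lemma ode_exists:
  fixes a :: "real \<Rightarrow> 'a::euclidean_space \<Rightarrow> 'a" and b :: "real \<Rightarrow> 'a"
  assumes lin: "\<And>t. t \<in> {0..1} \<Longrightarrow> linear (a t)"
  and cont: "\<And>x. continuous_on {0..1} (\<lambda>t. a t x)"
  and bc: "continuous_on {0..1} b"
  shows "\<exists>V. V 0 = V0 \<and> (\<forall>t\<in>{0..1}. (V has_vector_derivative (a t (V t) + b t)) (at t within {0..1}))"
proof -
  obtain M where M0: "M \<ge> 0" and M: "\<And>t x. t \<in> {0..1} \<Longrightarrow> norm (a t x) \<le> M * norm x"
    using lin_bound_unif[OF lin cont] by blast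
  let ?P = "picard a b V0"
  have contP: "continuous_on {0..1} (?P k)" for k
  proof (induction k)
    case 0 then show ?case by (simp add: continuous_on_const)
  next
    case (Suc k)
    have ci: "continuous_on {0..1} (\<lambda>r. a r (?P k r) + b r)"
      by (intro continuous_intros cont_apply_lin[OF lin cont Suc] bc)
    have "continuous_on {0..1} (\<lambda>u. integral {0..u} (\<lambda>r. a r (?P k r) + b r))"
      by (rule continuous_on_vector_derivative) (rule integral_has_vector_derivative[OF ci])
    then show ?case by (auto intro!: continuous_intros)
  qed
  have ci: "continuous_on {0..1} (\<lambda>r. a r (?P k r) + b r)" for k
    by (intro continuous_intros cont_apply_lin[OF lin cont contP] bc)
  define D where "D k t = ?P (Suc k) t - ?P k t" for k t
  obtain C where C0: "C \<ge> 0" and C: "\<And>t. t \<in> {0..1} \<Longrightarrow> norm (D 0 t) \<le> C"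
  proof -
    have "continuous_on {0..1} (D 0)" unfolding D_def by (intro continuous_intros contP)
    then have "bounded (D 0 ` {0..1})" by (intro compact_imp_bounded compact_continuous_image) auto
    then obtain C where "\<forall>t\<in>{0..1}. norm (D 0 t) \<le> C" by (auto simp: bounded_iff)
    then show ?thesis using that[of "\<bar>C\<bar>"] by force
  qed
  have integ: "(\<lambda>r. a r (?P k r) + b r) integrable_on {0..t}" if "t \<in> {0..1}" for k t
    by (rule integrable_continuous_real) (rule continuous_on_subset[OF ci[of k]], use that in auto)
  have Dbound: "\<forall>t\<in>{0..1}. norm (D k t) \<le> C * M^k * t^k / fact k" for k
  proof (induction k)
    case 0 then show ?case using C by auto
  next
    case (Suc k)
    show ?case
    proof
      fix t :: real assume t: "t \<in> {0..1}"
      have eq: "D (Suc k) t = integral {0..t} (\<lambda>r. a r (D k r))"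
      proof -
        have Ps: "?P (Suc n) t = V0 + integral {0..t} (\<lambda>r. a r (?P n r) + b r)" for n by simp
        have "D (Suc k) t = integral {0..t} (\<lambda>r. (a r (?P (Suc k) r) + b r) - (a r (?P k r) + b r))"
          unfolding D_def Ps[of "Suc k"] Ps[of k] integral_diff[OF integ[OF t] integ[OF t]] by (simp del: picard.simps)
        also have "\<dots> = integral {0..t} (\<lambda>r. a r (D k r))"
          by (intro integral_cong) (use t in \<open>auto simp: D_def linear_diff[OF lin]\<close>)
        finally show ?thesis .
      qed
      have i1: "(\<lambda>r. a r (D k r)) integrable_on {0..t}"
        using integrable_diff[OF integ[OF t, of "Suc k"] integ[OF t, of k]]
        by (rule integrable_eq) (use t in \<open>auto simp: D_def linear_diff[OF lin]\<close>)
      define F where "F x = C * M^(Suc k) * x^(Suc k) / fact (Suc k)" for x :: real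
      have FI: "((\<lambda>r. M * (C * M^k * r^k / fact k)) has_integral (F t - F 0)) {0..t}"
      proof (rule fundamental_theorem_of_calculus)
        show "0 \<le> t" using t by simp
        fix x :: real
        have "(F has_real_derivative C * M^(Suc k) * (of_nat (Suc k) * x^k) / fact (Suc k)) (at x within {0..t})"
        proof -
          have d: "((\<lambda>x. x^(Suc k)) has_real_derivative real (Suc k) * x^k) (at x within {0..t})"
            using DERIV_pow[of "Suc k" x "{0..t}"] by simp
          show ?thesis unfolding F_def by (rule DERIV_cdivide, rule DERIV_cmult, rule d)
        qed
        moreover have "C * M^(Suc k) * (of_nat (Suc k) * x^k) / fact (Suc k) = M * (C * M^k * x^k / fact k)"
        proof -
          have f: "fact (Suc k) = (real (Suc k)) * (fact k :: real)" by simp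
          have q: "real (Suc k) \<noteq> 0" by simp
          show ?thesis unfolding f using q by (simp only: power_Suc) (simp add: field_simps del: of_nat_Suc)
        qed
        ultimately show "(F has_vector_derivative M * (C * M^k * x^k / fact k)) (at x within {0..t})"
          by (simp add: has_real_derivative_iff_has_vector_derivative ac_simps)
      qed
      have "norm (D (Suc k) t) \<le> integral {0..t} (\<lambda>r. M * (C * M^k * r^k / fact k))"
        unfolding eq
      proof (rule integral_norm_bound_integral[OF i1])
        show "(\<lambda>r. M * (C * M ^ k * r ^ k / fact k)) integrable_on {0..t}" using FI by blast
        fix r assume r: "r \<in> {0..t}"
        then have r1: "r \<in> {0..1}" using t by auto
        have "norm (a r (D k r)) \<le> M * norm (D k r)" by (rule M[OF r1])
        also have "\<dots> \<le> M * (C * M^k * r^k / fact k)"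
          using Suc.IH r1 M0 by (intro mult_left_mono) auto
        finally show "norm (a r (D k r)) \<le> M * (C * M ^ k * r ^ k / fact k)" .
      qed
      also have "\<dots> = F t" unfolding integral_unique[OF FI] by (simp add: F_def)
      finally show "norm (D (Suc k) t) \<le> C * M ^ Suc k * t ^ Suc k / fact (Suc k)"
        by (simp add: F_def)
    qed
  qed
  have Db: "norm (D k t) \<le> C * (inverse (fact k) * M^k)" if "t \<in> {0..1}" for k t
  proof -
    have "norm (D k t) \<le> C * M^k * t^k / fact k" using Dbound that by blast
    also have "\<dots> \<le> C * M^k * 1 / fact k"
      using that C0 M0 by (intro divide_right_mono mult_left_mono) (auto simp: power_le_one)
    finally show ?thesis by (simp add: field_simps)
  qed
  have summ: "summable (\<lambda>k. C * (inverse (fact k) * M^k))"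
    by (intro summable_mult summable_exp)
  have ul: "uniform_limit {0..1} (\<lambda>n t. \<Sum>k<n. D k t) (\<lambda>t. \<Sum>k. D k t) sequentially"
    by (rule Weierstrass_m_test[OF Db summ])
  define V where "V t = V0 + (\<Sum>k. D k t)" for t
  have Psum: "?P n t = V0 + (\<Sum>k<n. D k t)" for n t
    unfolding D_def by (induction n) (auto simp: algebra_simps)
  have ulP: "uniform_limit {0..1} (\<lambda>n t. ?P n t) V sequentially"
    unfolding Psum V_def by (intro uniform_limit_intros ul)
  have contV: "continuous_on {0..1} V"
    by (rule uniform_limit_theorem[OF _ ulP]) (auto intro: contP always_eventually)
  have civ: "continuous_on {0..1} (\<lambda>r. a r (V r) + b r)"
    by (intro continuous_intros cont_apply_lin[OF lin cont contV] bc)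
  have inteq: "V t = V0 + integral {0..t} (\<lambda>r. a r (V r) + b r)" if t: "t \<in> {0..1}" for t
  proof -
    have l1: "(\<lambda>n. ?P (Suc n) t) \<longlonglongrightarrow> V t"
      using tendsto_uniform_limitI[OF ulP t] by (rule LIMSEQ_Suc)
    have l2: "(\<lambda>n. ?P (Suc n) t) \<longlonglongrightarrow> V0 + integral {0..t} (\<lambda>r. a r (V r) + b r)"
    proof -
      have iv: "(\<lambda>r. a r (V r) + b r) integrable_on {0..t}"
        by (rule integrable_continuous_real) (rule continuous_on_subset[OF civ], use t in auto)
      have "(\<lambda>n. integral {0..t} (\<lambda>r. a r (?P n r) + b r) - integral {0..t} (\<lambda>r. a r (V r) + b r)) \<longlonglongrightarrow> 0"
      proof (rule LIMSEQ_I)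
        fix e :: real assume e: "e > 0"
        define e' where "e' = e / (2 * (M + 1))"
        have e': "e' > 0" using e M0 by (simp add: e'_def)
        obtain N where N: "\<And>n r. n \<ge> N \<Longrightarrow> r \<in> {0..1} \<Longrightarrow> dist (?P n r) (V r) < e'"
          using uniform_limitD[OF ulP e'] unfolding eventually_sequentially by blast
        show "\<exists>N. \<forall>n\<ge>N. norm (integral {0..t} (\<lambda>r. a r (?P n r) + b r) - integral {0..t} (\<lambda>r. a r (V r) + b r) - 0) < e"
        proof (intro exI allI impI)
          fix n assume n: "n \<ge> N"
          have "integral {0..t} (\<lambda>r. a r (?P n r) + b r) - integral {0..t} (\<lambda>r. a r (V r) + b r)
              = integral {0..t} (\<lambda>r. a r (?P n r - V r))"
            unfolding integral_diff[OF integ[OF t] iv, symmetric]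
            by (intro integral_cong) (use t in \<open>auto simp: linear_diff[OF lin]\<close>)
          also have "norm \<dots> \<le> (M * e') * Henstock_Kurzweil_Integration.content (cbox 0 t)"
          proof (rule has_integral_bound)
            show "0 \<le> M * e'" using M0 e' by simp
            have "(\<lambda>r. a r (?P n r) + b r - (a r (V r) + b r)) integrable_on {0..t}"
              by (rule integrable_diff[OF integ[OF t] iv])
            then have "(\<lambda>r. a r (?P n r - V r)) integrable_on {0..t}"
              by (rule integrable_eq) (use t in \<open>auto simp: linear_diff[OF lin]\<close>)
            then show "((\<lambda>r. a r (?P n r - V r)) has_integral integral {0..t} (\<lambda>r. a r (?P n r - V r))) (cbox 0 t)"
              by (simp add: integrable_integral)
            fix r assume "r \<in> cbox 0 t"
            then have r1: "r \<in> {0..1}" using t by auto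
            have "norm (a r (?P n r - V r)) \<le> M * norm (?P n r - V r)" by (rule M[OF r1])
            also have "\<dots> \<le> M * e'" using N[OF n r1] M0 by (intro mult_left_mono) (auto simp: dist_norm)
            finally show "norm (a r (?P n r - V r)) \<le> M * e'" .
          qed
          also have "\<dots> \<le> M * e' * 1" using t M0 e' by (intro mult_left_mono) auto
          also have "\<dots> < e" using e M0 by (simp add: e'_def field_simps) (smt (verit) mult_nonneg_nonneg)
          finally show "norm (integral {0..t} (\<lambda>r. a r (?P n r) + b r) - integral {0..t} (\<lambda>r. a r (V r) + b r) - 0) < e"
            by simp
        qed
      qed
      then have "(\<lambda>n. integral {0..t} (\<lambda>r. a r (?P n r) + b r)) \<longlonglongrightarrow> integral {0..t} (\<lambda>r. a r (V r) + b r)"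
        by (simp add: LIM_zero_iff)
      then show ?thesis by (simp add: tendsto_add)
    qed
    show ?thesis using LIMSEQ_unique[OF l1 l2] .
  qed
  show ?thesis
  proof (intro exI conjI ballI)
    show "V 0 = V0" using inteq[of 0] by simp
    fix t :: real assume t: "t \<in> {0..1}"
    have "((\<lambda>u. V0 + integral {0..u} (\<lambda>r. a r (V r) + b r)) has_vector_derivative (a t (V t) + b t)) (at t within {0..1})"
      using has_vector_derivative_add[OF has_vector_derivative_const[of V0] integral_has_vector_derivative[OF civ t]] by simp
    then show "(V has_vector_derivative a t (V t) + b t) (at t within {0..1})"
      by (rule has_vector_derivative_transform[OF t inteq, rotated])
  qed
qed



lemma transpose_add': "transpose (A + B) = transpose A + transpose (B::'a::semiring_1^'n^'m)"
  by (simp add: transpose_def vec_eq_iff)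
lemma transpose_diff': "transpose (A - B) = transpose A - transpose (B::'a::ring_1^'n^'m)"
  by (simp add: transpose_def vec_eq_iff)
lemma transpose_zero': "transpose (0::'a::semiring_1^'n^'m) = 0"
  by (simp add: transpose_def vec_eq_iff)
lemma transpose_uminus': "transpose (- A) = - transpose (A::'a::ring_1^'n^'m)"
  by (simp add: transpose_def vec_eq_iff)

lemma linear_transpose': "linear (transpose :: real^'n^'m \<Rightarrow> real^'m^'n)"
  by (rule linearI) (simp_all add: transpose_add' transpose_scalar)

lemma bounded_linear_transpose': "bounded_linear (transpose :: real^'n^'m \<Rightarrow> real^'m^'n)"
  using linear_transpose' linear_conv_bounded_linear by blast

lemma Sym_iff: "A \<in> Sym \<longleftrightarrow> transpose A = A" by (simp add: Sym_def)
lemma Sym_0[simp]: "0 \<in> Sym" by (simp add: Sym_def transpose_zero')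
lemma Sym_1[simp]: "mat 1 \<in> Sym" by (simp add: Sym_def)
lemma Sym_add[intro]: "A \<in> Sym \<Longrightarrow> B \<in> Sym \<Longrightarrow> A + B \<in> Sym" by (simp add: Sym_def transpose_add')
lemma Sym_diff[intro]: "A \<in> Sym \<Longrightarrow> B \<in> Sym \<Longrightarrow> A - B \<in> Sym" by (simp add: Sym_def transpose_diff')
lemma Sym_uminus[intro]: "A \<in> Sym \<Longrightarrow> - A \<in> Sym" by (simp add: Sym_def transpose_uminus')
lemma Sym_scaleR[intro]: "A \<in> Sym \<Longrightarrow> c *\<^sub>R A \<in> Sym" by (simp add: Sym_def transpose_scalar)
lemma Sym_sum[intro]: "(\<And>i. i \<in> I \<Longrightarrow> f i \<in> Sym) \<Longrightarrow> sum f I \<in> Sym"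
  by (induction I rule: infinite_finite_induct) auto
lemma SPD_Sym: "S \<in> SPD \<Longrightarrow> S \<in> Sym" by (simp add: SPD_def Sym_def)

definition symm :: "'n::finite mat \<Rightarrow> 'n mat" where
  "symm X = (1/2) *\<^sub>R (X + transpose X)"

lemma symm_Sym[simp, intro]: "symm X \<in> Sym"
  by (simp add: symm_def Sym_def transpose_scalar transpose_add' add.commute)
lemma Sym_symm: "X \<in> Sym \<Longrightarrow> symm X = X"
  by (simp add: symm_def Sym_def scaleR_2[symmetric])
lemma linear_symm: "linear symm"
  by (rule linearI) (simp_all add: symm_def transpose_add' transpose_scalar algebra_simps)
lemma symm_transpose[simp]: "symm (transpose X) = symm X"
  by (simp add: symm_def add.commute)

lemma bos_both: "bilinear_on_Sym B \<Longrightarrow> A \<in> Sym \<Longrightarrow> A' \<in> Sym \<Longrightarrow> C \<in> Sym \<Longrightarrow>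
   B (a *\<^sub>R A + A') C = a *\<^sub>R B A C + B A' C \<and> B C (a *\<^sub>R A + A') = a *\<^sub>R B C A + B C A'"
  unfolding bilinear_on_Sym_def by (erule allE[of _ A], erule allE[of _ A'], erule allE[of _ C], erule allE[of _ a]) simp
lemma bos_zero_l: "bilinear_on_Sym B \<Longrightarrow> C \<in> Sym \<Longrightarrow> B 0 C = 0"
proof -
  assume "bilinear_on_Sym B" "C \<in> Sym"
  then have "B (1 *\<^sub>R 0 + 0) C = 1 *\<^sub>R B 0 C + B 0 C" using bos_both[of B 0 0 C 1] by simp
  then show ?thesis by simp
qed
lemma bos_zero_r: "bilinear_on_Sym B \<Longrightarrow> C \<in> Sym \<Longrightarrow> B C 0 = 0"
proof -
  assume "bilinear_on_Sym B" "C \<in> Sym"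
  then have "B C (1 *\<^sub>R 0 + 0) = 1 *\<^sub>R B C 0 + B C 0" using bos_both[of B 0 0 C 1] by simp
  then show ?thesis by simp
qed
lemma bos_l: "bilinear_on_Sym B \<Longrightarrow> A \<in> Sym \<Longrightarrow> A' \<in> Sym \<Longrightarrow> C \<in> Sym \<Longrightarrow> B (a *\<^sub>R A + A') C = a *\<^sub>R B A C + B A' C"
  using bos_both by blast
lemma bos_r: "bilinear_on_Sym B \<Longrightarrow> A \<in> Sym \<Longrightarrow> A' \<in> Sym \<Longrightarrow> C \<in> Sym \<Longrightarrow> B C (a *\<^sub>R A + A') = a *\<^sub>R B C A + B C A'"
  using bos_both by blast

lemma bos_sum_l:
  assumes B: "bilinear_on_Sym B" and C: "C \<in> Sym" and A: "\<And>i. i \<in> I \<Longrightarrow> A i \<in> Sym" and fin: "finite I"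
  shows "B (\<Sum>i\<in>I. c i *\<^sub>R A i) C = (\<Sum>i\<in>I. c i *\<^sub>R B (A i) C)"
  using fin A
proof (induction I rule: finite_induct)
  case empty then show ?case using bos_zero_l[OF B C] by simp
next
  case (insert x F)
  have "B (\<Sum>i\<in>insert x F. c i *\<^sub>R A i) C = B (c x *\<^sub>R A x + (\<Sum>i\<in>F. c i *\<^sub>R A i)) C"
    using insert by simp
  also have "\<dots> = c x *\<^sub>R B (A x) C + B (\<Sum>i\<in>F. c i *\<^sub>R A i) C"
    by (rule bos_l[OF B]) (use insert C in auto)
  finally show ?case using insert by simp
qed

lemma bos_sum_r:
  assumes B: "bilinear_on_Sym B" and C: "C \<in> Sym" and A: "\<And>i. i \<in> I \<Longrightarrow> A i \<in> Sym" and fin: "finite I"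
  shows "B C (\<Sum>i\<in>I. c i *\<^sub>R A i) = (\<Sum>i\<in>I. c i *\<^sub>R B C (A i))"
  using fin A
proof (induction I rule: finite_induct)
  case empty then show ?case using bos_zero_r[OF B C] by simp
next
  case (insert x F)
  have "B C (\<Sum>i\<in>insert x F. c i *\<^sub>R A i) = B C (c x *\<^sub>R A x + (\<Sum>i\<in>F. c i *\<^sub>R A i))"
    using insert by simp
  also have "\<dots> = c x *\<^sub>R B C (A x) + B C (\<Sum>i\<in>F. c i *\<^sub>R A i)"
    by (rule bos_r[OF B]) (use insert C in auto)
  finally show ?case using insert by simp
qed

definition G :: "('n::finite mat \<Rightarrow> 'n mat \<Rightarrow> 'n mat \<Rightarrow> 'n mat) \<Rightarrow> 'n mat \<Rightarrow> 'n mat \<Rightarrow> 'n mat \<Rightarrow> 'n mat" where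
  "G \<Gamma> T x y = (\<Sum>i\<in>Basis. \<Sum>j\<in>Basis. ((x \<bullet> i) * (y \<bullet> j)) *\<^sub>R \<Gamma> T (symm i) (symm j))"

definition dG :: "('n::finite mat \<Rightarrow> 'n mat \<Rightarrow> 'n mat \<Rightarrow> 'n mat) \<Rightarrow> 'n mat \<Rightarrow> 'n mat \<Rightarrow> 'n mat \<Rightarrow> 'n mat \<Rightarrow> 'n mat" where
  "dG \<Gamma> T u x y = (\<Sum>i\<in>Basis. \<Sum>j\<in>Basis. ((x \<bullet> i) * (y \<bullet> j)) *\<^sub>R dd (\<lambda>T. \<Gamma> T (symm i) (symm j)) T u)"

lemma bilinear_sumform:
  fixes F :: "'a::euclidean_space \<Rightarrow> 'a \<Rightarrow> 'b::real_vector"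
  shows "bilinear (\<lambda>x y. \<Sum>i\<in>Basis. \<Sum>j\<in>Basis. ((x \<bullet> i) * (y \<bullet> j)) *\<^sub>R F i j)"
  unfolding bilinear_def
proof (intro conjI allI)
  fix x :: 'a
  show "linear (\<lambda>y. \<Sum>i\<in>Basis. \<Sum>j\<in>Basis. ((x \<bullet> i) * (y \<bullet> j)) *\<^sub>R F i j)"
    by (intro linear_compose_sum ballI) (simp add: linear_iff inner_add_left inner_add_right distrib_left scaleR_add_left)
next
  fix y :: 'a
  show "linear (\<lambda>x. \<Sum>i\<in>Basis. \<Sum>j\<in>Basis. ((x \<bullet> i) * (y \<bullet> j)) *\<^sub>R F i j)"
    by (intro linear_compose_sum ballI) (simp add: linear_iff inner_add_left inner_add_right distrib_right scaleR_add_left)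
qed

lemma bilinear_G: "bilinear (G \<Gamma> T)"
  unfolding G_def[abs_def] by (rule bilinear_sumform)
lemma bilinear_dG: "bilinear (dG \<Gamma> T u)"
  unfolding dG_def[abs_def] by (rule bilinear_sumform)

lemma G_eq:
  assumes conn: "connection \<Gamma>" and T: "T \<in> SPD"
  shows "G \<Gamma> T x y = \<Gamma> T (symm x) (symm y)"
proof -
  have B: "bilinear_on_Sym (\<Gamma> T)" using conn T by (simp add: connection_def)
  have sx: "symm x = (\<Sum>i\<in>Basis. (x \<bullet> i) *\<^sub>R symm i)" by (rule lin_expand[OF linear_symm])
  have sy: "symm y = (\<Sum>j\<in>Basis. (y \<bullet> j) *\<^sub>R symm j)" by (rule lin_expand[OF linear_symm])
  have "\<Gamma> T (symm x) (symm y) = (\<Sum>i\<in>Basis. (x \<bullet> i) *\<^sub>R \<Gamma> T (symm i) (symm y))"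
    by (subst sx, rule bos_sum_l[OF B]) auto
  also have "\<dots> = (\<Sum>i\<in>Basis. (x \<bullet> i) *\<^sub>R (\<Sum>j\<in>Basis. (y \<bullet> j) *\<^sub>R \<Gamma> T (symm i) (symm j)))"
    by (intro sum.cong refl arg_cong[where f="\<lambda>z. _ *\<^sub>R z"]) (subst sy, rule bos_sum_r[OF B], auto)
  also have "\<dots> = G \<Gamma> T x y"
    by (simp add: G_def scaleR_sum_right)
  finally show ?thesis by simp
qed

lemma G_Sym_eq: "connection \<Gamma> \<Longrightarrow> T \<in> SPD \<Longrightarrow> x \<in> Sym \<Longrightarrow> y \<in> Sym \<Longrightarrow> G \<Gamma> T x y = \<Gamma> T x y"
  by (simp add: G_eq Sym_symm)
lemma G_in_Sym: "connection \<Gamma> \<Longrightarrow> T \<in> SPD \<Longrightarrow> G \<Gamma> T x y \<in> Sym"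
  by (simp add: G_eq connection_def)
lemma G_transpose: "connection \<Gamma> \<Longrightarrow> T \<in> SPD \<Longrightarrow> G \<Gamma> T x (transpose y) = G \<Gamma> T x y"
  by (simp add: G_eq)

lemma smooth_Gamma: "connection \<Gamma> \<Longrightarrow> X \<in> Sym \<Longrightarrow> Y \<in> Sym \<Longrightarrow> smooth_SPD (\<lambda>S. \<Gamma> S X Y)"
  by (simp add: connection_def)

lemma G_cont: "connection \<Gamma> \<Longrightarrow> continuous_on SPD (\<lambda>T. G \<Gamma> T x y)"
proof -
  assume c: "connection \<Gamma>"
  have "continuous_on SPD (\<lambda>T. \<Gamma> T (symm i) (symm j))" for i j
    using smooth_Gamma[OF c symm_Sym symm_Sym, of i j] unfolding smooth_SPD_def
    by (erule_tac x="[]" in allE) simp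
  then show ?thesis unfolding G_def by (intro continuous_intros)
qed

lemma dG_cont: "connection \<Gamma> \<Longrightarrow> u \<in> Sym \<Longrightarrow> continuous_on SPD (\<lambda>T. dG \<Gamma> T u x y)"
proof -
  assume c: "connection \<Gamma>" and u: "u \<in> Sym"
  have "continuous_on SPD (\<lambda>T. dd (\<lambda>T. \<Gamma> T (symm i) (symm j)) T u)" for i j
  proof -
    have "continuous_on SPD (iter_dd [u] (\<lambda>T. \<Gamma> T (symm i) (symm j)))"
      using smooth_Gamma[OF c symm_Sym symm_Sym, of i j] u unfolding smooth_SPD_def
      by (erule_tac x="[u]" in allE) simp
    then show ?thesis by simp
  qed
  then show ?thesis unfolding dG_def by (intro continuous_intros)
qed

lemma Gamma_line_deriv:
  assumes c: "connection \<Gamma>" and T: "T \<in> SPD" and u: "u \<in> Sym" and X: "X \<in> Sym" and Y: "Y \<in> Sym"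
  shows "((\<lambda>r. \<Gamma> (T + r *\<^sub>R u) X Y) has_vector_derivative dd (\<lambda>T. \<Gamma> T X Y) T u) (at 0)"
proof -
  have "(\<lambda>r. \<Gamma> (T + r *\<^sub>R u) X Y) differentiable (at 0)"
    using smooth_Gamma[OF c X Y] T u unfolding smooth_SPD_def
    by (erule_tac x="[]" in allE) simp
  then show ?thesis unfolding dd_def by (simp add: vector_derivative_works)
qed

lemma G_line_deriv:
  assumes c: "connection \<Gamma>" and T: "T \<in> SPD" and u: "u \<in> Sym"
  shows "((\<lambda>r. G \<Gamma> (T + r *\<^sub>R u) x y) has_vector_derivative dG \<Gamma> T u x y) (at 0)"
  unfolding G_def dG_def
  by (intro has_vector_derivative_sum bounded_linear.has_vector_derivative[OF bounded_linear_scaleR_right]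
      Gamma_line_deriv[OF c T u] symm_Sym)



lemma dd_const[simp]: "dd (\<lambda>T. c) x v = 0"
  unfolding dd_def by (rule vector_derivative_at) simp

lemma iter_dd_const: "iter_dd vs (\<lambda>T. c) = (if vs = [] then (\<lambda>T. c) else (\<lambda>T. 0))"
proof (induction vs)
  case Nil then show ?case by simp
next
  case (Cons v vs)
  then have "iter_dd vs (\<lambda>T. c) = (\<lambda>T. if vs = [] then c else 0)" by auto
  then show ?case by simp
qed

lemma vfield_const: "A \<in> Sym \<Longrightarrow> vfield (\<lambda>_. A)"
  unfolding vfield_def smooth_SPD_def by (auto simp: iter_dd_const continuous_on_const)

lemma curv_pointwise:
  assumes conn: "connection \<Gamma>" and cf: "curvature_free \<Gamma>" and P: "P \<in> SPD"
    and A: "A \<in> Sym" and B: "B \<in> Sym" and C: "C \<in> Sym"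
  shows "dd (\<lambda>T. \<Gamma> T B C) P A - dd (\<lambda>T. \<Gamma> T A C) P B + \<Gamma> P A (\<Gamma> P B C) - \<Gamma> P B (\<Gamma> P A C) = 0"
proof -
  have h: "cov \<Gamma> (\<lambda>_. A) (cov \<Gamma> (\<lambda>_. B) (\<lambda>_. C)) P - cov \<Gamma> (\<lambda>_. B) (cov \<Gamma> (\<lambda>_. A) (\<lambda>_. C)) P
      - cov \<Gamma> (lie (\<lambda>_. A) (\<lambda>_. B)) (\<lambda>_. C) P = 0"
    using cf P vfield_const[OF A] vfield_const[OF B] vfield_const[OF C]
    unfolding curvature_free_def by blast
  have c1: "cov \<Gamma> (\<lambda>_. B) (\<lambda>_. C) = (\<lambda>T. \<Gamma> T B C)" "cov \<Gamma> (\<lambda>_. A) (\<lambda>_. C) = (\<lambda>T. \<Gamma> T A C)"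
    by (auto simp: cov_def fun_eq_iff)
  have l: "lie (\<lambda>_. A) (\<lambda>_. B) = (\<lambda>_. 0)" by (auto simp: lie_def fun_eq_iff)
  have bP: "bilinear_on_Sym (\<Gamma> P)" using conn P by (simp add: connection_def)
  have z: "cov \<Gamma> (\<lambda>_. 0) (\<lambda>_. C) P = 0" by (simp add: cov_def bos_zero_l[OF bP C])
  show ?thesis using h unfolding c1 l z by (simp add: cov_def algebra_simps)
qed

lemma mv_bound: "\<bar>x \<bullet> (v *v x)\<bar> \<le> (\<Sum>i\<in>UNIV. \<Sum>j\<in>UNIV. \<bar>v $ i $ j\<bar>) * (norm x)^2"
proof -
  have "\<bar>x \<bullet> (v *v x)\<bar> \<le> norm x * norm (v *v x)" by (rule Cauchy_Schwarz_ineq2)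
  also have "norm (v *v x) \<le> onorm ((*v) v) * norm x" by (rule onorm) simp
  also have "onorm ((*v) v) \<le> (\<Sum>i\<in>UNIV. \<Sum>j\<in>UNIV. \<bar>v $ i $ j\<bar>)" by (rule onorm_le_matrix_component_sum)
  finally show ?thesis by (simp add: power2_eq_square mult_left_mono mult_right_mono ac_simps)
qed

lemma spd_lower:
  assumes S: "S \<in> SPD" shows "\<exists>l>0. \<forall>x. l * (norm x)^2 \<le> x \<bullet> (S *v x)"
proof -
  have cont: "continuous_on (sphere 0 1) (\<lambda>x::real^'a. x \<bullet> (S *v x))"
    by (intro continuous_intros linear_continuous_on) simp
  have ne: "sphere (0::real^'a) 1 \<noteq> {}" using norm_axis_1[of undefined] unfolding sphere_def by (metis (mono_tags) dist_0_norm empty_Collect_eq)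
  obtain x0 where x0: "x0 \<in> sphere 0 1" and mn: "\<And>y. y \<in> sphere 0 1 \<Longrightarrow> x0 \<bullet> (S *v x0) \<le> y \<bullet> (S *v y)"
    using continuous_attains_inf[OF compact_sphere ne cont] by blast
  define l where "l = x0 \<bullet> (S *v x0)"
  have "x0 \<noteq> 0" using x0 by auto
  then have lpos: "l > 0" using S unfolding SPD_def l_def by auto
  have "l * (norm x)^2 \<le> x \<bullet> (S *v x)" for x
  proof (cases "x = 0")
    case True then show ?thesis by simp
  next
    case False
    define y where "y = (1 / norm x) *\<^sub>R x"
    have y: "y \<in> sphere 0 1" using False by (simp add: y_def)
    have xy: "x = norm x *\<^sub>R y" using False by (simp add: y_def)
    have "x \<bullet> (S *v x) = (norm x)^2 * (y \<bullet> (S *v y))"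
      by (subst (1 2) xy) (simp add: matrix_scaleR_vector_ac scaleR_matrix_vector_assoc[symmetric] power2_eq_square)
    moreover have "l \<le> y \<bullet> (S *v y)" using mn[OF y] by (simp add: l_def)
    ultimately show ?thesis by (simp add: mult_right_mono mult.commute[of "(norm x)^2"])
  qed
  then show ?thesis using lpos by blast
qed

lemma SPD_intro: "Q \<in> Sym \<Longrightarrow> l > 0 \<Longrightarrow> (\<And>x. l * (norm x)^2 \<le> x \<bullet> (Q *v x)) \<Longrightarrow> Q \<in> SPD"
proof -
  assume Q: "Q \<in> Sym" "l > 0" "\<And>x. l * (norm x)^2 \<le> x \<bullet> (Q *v x)"
  have "x \<bullet> (Q *v x) > 0" if "x \<noteq> 0" for x
    using Q(3)[of x] Q(2) that by (smt (verit) mult_pos_pos zero_less_norm_iff zero_less_power)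
  then show ?thesis using Q(1) by (simp add: SPD_def Sym_def)
qed

lemma SPD_pts:
  assumes S: "S \<in> SPD" and v: "v \<in> Sym"
  shows "\<exists>\<delta>>0. \<forall>t r. t \<in> {0..1} \<longrightarrow> \<bar>r\<bar> \<le> \<delta> \<longrightarrow> S + t *\<^sub>R (mat 1 - S) + r *\<^sub>R v \<in> SPD"
proof -
  obtain l where l: "l > 0" "\<And>x. l * (norm x)^2 \<le> x \<bullet> (S *v x)" using spd_lower[OF S] by blast
  define cv where "cv = (\<Sum>i\<in>UNIV. \<Sum>j\<in>UNIV. \<bar>v $ i $ j\<bar>)"
  have cv: "cv \<ge> 0" unfolding cv_def by (simp add: sum_nonneg)
  define m where "m = min l 1"
  have m: "m > 0" "m \<le> l" "m \<le> 1" using l by (auto simp: m_def)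
  define \<delta> where "\<delta> = m / (2 * (cv + 1))"
  have d: "\<delta> > 0" using m cv by (simp add: \<delta>_def)
  have dcv: "\<delta> * cv \<le> m / 2"
  proof -
    have "\<delta> * cv \<le> \<delta> * (cv + 1)" using d by simp
    also have "\<dots> = m / 2" using cv by (simp add: \<delta>_def field_simps)
    finally show ?thesis .
  qed
  have "S + t *\<^sub>R (mat 1 - S) + r *\<^sub>R v \<in> SPD" if t: "t \<in> {0..1}" and r: "\<bar>r\<bar> \<le> \<delta>" for t r
  proof (rule SPD_intro)
    show "S + t *\<^sub>R (mat 1 - S) + r *\<^sub>R v \<in> Sym" using SPD_Sym[OF S] v by (intro Sym_add Sym_scaleR Sym_diff Sym_1)
    show "m / 2 > 0" using m by simp
    fix x :: "real^'a"
    have eq: "x \<bullet> ((S + t *\<^sub>R (mat 1 - S) + r *\<^sub>R v) *v x) = (1 - t) * (x \<bullet> (S *v x)) + t * (norm x)^2 + r * (x \<bullet> (v *v x))"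
      by (simp add: matrix_vector_mult_add_rdistrib matrix_vector_mult_diff_rdistrib
          scaleR_matrix_vector_assoc[symmetric] inner_add_right inner_diff_right power2_norm_eq_inner algebra_simps)
    have a: "(1 - t) * (l * (norm x)^2) \<le> (1 - t) * (x \<bullet> (S *v x))" using t l(2)[of x] by (intro mult_left_mono) auto
    have b: "r * (x \<bullet> (v *v x)) \<ge> - (\<delta> * cv * (norm x)^2)"
    proof -
      have "\<bar>r * (x \<bullet> (v *v x))\<bar> \<le> \<delta> * (cv * (norm x)^2)"
        unfolding abs_mult using r mv_bound[of x v] by (intro mult_mono) (auto simp: cv_def)
      then show ?thesis by (simp add: ac_simps)
    qed
    have c1: "(1 - t) * m \<le> (1 - t) * l" using t m by (intro mult_left_mono) auto
    have c2: "t * m \<le> t" using t m mult_left_mono[of m 1 t] by auto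
    have c: "(1 - t) * l + t \<ge> m" using c1 c2 unfolding left_diff_distrib by linarith
    have "m / 2 * (norm x)^2 \<le> ((1 - t) * l + t) * (norm x)^2 - \<delta> * cv * (norm x)^2"
    proof -
      have "m/2 \<le> (1 - t) * l + t - \<delta> * cv" using c dcv by linarith
      then have "m/2 * (norm x)^2 \<le> ((1 - t) * l + t - \<delta> * cv) * (norm x)^2" by (rule mult_right_mono) simp
      then show ?thesis by (simp only: left_diff_distrib)
    qed
    also have "\<dots> \<le> x \<bullet> ((S + t *\<^sub>R (mat 1 - S) + r *\<^sub>R v) *v x)"
      unfolding eq using a b by (simp add: algebra_simps)
    finally show "m / 2 * (norm x)^2 \<le> x \<bullet> ((S + t *\<^sub>R (mat 1 - S) + r *\<^sub>R v) *v x)" .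
  qed
  then show ?thesis using d by blast
qed

lemma SPD_line:
  assumes P: "P \<in> SPD" and u: "u \<in> Sym"
  shows "\<exists>e>0. \<forall>r. \<bar>r\<bar> < e \<longrightarrow> P + r *\<^sub>R u \<in> SPD"
proof -
  obtain \<delta> where d: "\<delta> > 0" and H: "\<forall>t r. t \<in> {0..1} \<longrightarrow> \<bar>r\<bar> \<le> \<delta> \<longrightarrow> P + t *\<^sub>R (mat 1 - P) + r *\<^sub>R u \<in> SPD"
    using SPD_pts[OF P u] by blast
  have "P + r *\<^sub>R u \<in> SPD" if "\<bar>r\<bar> < \<delta>" for r using H[rule_format, of 0 r] that by simp
  then show ?thesis using d by blast
qed

lemma SPD_seg: "S \<in> SPD \<Longrightarrow> t \<in> {0..1} \<Longrightarrow> S + t *\<^sub>R (mat 1 - S) \<in> SPD"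
proof -
  assume S: "S \<in> SPD" and t: "t \<in> {0..1}"
  obtain \<delta> where d: "\<delta> > 0" and H: "\<forall>t r. t \<in> {0..1} \<longrightarrow> \<bar>r\<bar> \<le> \<delta> \<longrightarrow> S + t *\<^sub>R (mat 1 - S) + r *\<^sub>R (0::real^'a^'a) \<in> SPD"
    using SPD_pts[OF S Sym_0] by blast
  show ?thesis using H[rule_format, of t 0] t d by simp
qed

lemma dd_Gamma_eq_dG:
  assumes conn: "connection \<Gamma>" and P: "P \<in> SPD" and A: "A \<in> Sym" and B: "B \<in> Sym" and C: "C \<in> Sym"
  shows "dd (\<lambda>T. \<Gamma> T B C) P A = dG \<Gamma> P A B C"
proof -
  obtain e where e: "e > 0" "\<And>r. \<bar>r\<bar> < e \<Longrightarrow> P + r *\<^sub>R A \<in> SPD" using SPD_line[OF P A] by blast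
  have g: "((\<lambda>r. G \<Gamma> (P + r *\<^sub>R A) B C) has_vector_derivative dG \<Gamma> P A B C) (at 0)"
    by (rule G_line_deriv[OF conn P A])
  have "((\<lambda>r. \<Gamma> (P + r *\<^sub>R A) B C) has_vector_derivative dG \<Gamma> P A B C) (at 0 within UNIV)"
    by (rule has_vector_derivative_transform_within[OF g e(1)]) (auto simp: G_Sym_eq[OF conn e(2) B C] dist_real_def)
  then show ?thesis using Gamma_line_deriv[OF conn P A B C] vector_derivative_unique_at by auto
qed

lemma curv_G:
  assumes conn: "connection \<Gamma>" and cf: "curvature_free \<Gamma>" and P: "P \<in> SPD"
    and A: "A \<in> Sym" and B: "B \<in> Sym" and C: "C \<in> Sym"
  shows "dG \<Gamma> P A B C - dG \<Gamma> P B A C + G \<Gamma> P A (G \<Gamma> P B C) - G \<Gamma> P B (G \<Gamma> P A C) = 0"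
proof -
  have s: "\<Gamma> P B C \<in> Sym" "\<Gamma> P A C \<in> Sym" using conn P A B C by (auto simp: connection_def)
  show ?thesis using curv_pointwise[OF conn cf P A B C]
    by (simp add: dd_Gamma_eq_dG[OF conn P] G_Sym_eq[OF conn P] A B C s)
qed

lemma line_shift:
  fixes x u :: "'a::real_normed_vector" and f :: "'a \<Rightarrow> 'b::real_normed_vector"
  assumes "((\<lambda>h. f ((x + r0 *\<^sub>R u) + h *\<^sub>R u)) has_vector_derivative D) (at 0)"
  shows "((\<lambda>r. f (x + r *\<^sub>R u)) has_vector_derivative D) (at r0)"
proof -
  have s: "((\<lambda>r. r - r0) has_vector_derivative 1) (at r0)"
    using has_vector_derivative_diff[OF has_vector_derivative_id has_vector_derivative_const] by simp
  have "(((\<lambda>h. f ((x + r0 *\<^sub>R u) + h *\<^sub>R u)) \<circ> (\<lambda>r. r - r0)) has_vector_derivative (1 *\<^sub>R D)) (at r0)"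
    by (rule vector_diff_chain_at[OF s]) (simp add: assms)
  moreover have "(\<lambda>h. f ((x + r0 *\<^sub>R u) + h *\<^sub>R u)) \<circ> (\<lambda>r. r - r0) = (\<lambda>r. f (x + r *\<^sub>R u))"
  proof -
    have e: "x + r0 *\<^sub>R u + (h - r0) *\<^sub>R u = x + h *\<^sub>R u" for h by (simp add: scaleR_diff_left algebra_simps)
    show ?thesis by (simp only: o_def e)
  qed
  ultimately show ?thesis by simp
qed

lemma ode_unique:
  fixes a :: "real \<Rightarrow> 'a::euclidean_space \<Rightarrow> 'a"
  assumes lin: "\<And>t. t \<in> {0..1} \<Longrightarrow> linear (a t)"
  and M: "\<And>t x. t \<in> {0..1} \<Longrightarrow> norm (a t x) \<le> M * norm x" and M0: "M \<ge> 0"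
  and d1: "\<And>t. t \<in> {0..1} \<Longrightarrow> (Xa has_vector_derivative a t (Xa t)) (at t within {0..1})"
  and d2: "\<And>t. t \<in> {0..1} \<Longrightarrow> (Xb has_vector_derivative a t (Xb t)) (at t within {0..1})"
  and i: "Xa 0 = Xb 0" and t: "t \<in> {0..1}"
  shows "Xa t = Xb t"
proof -
  have "norm (Xa t - Xb t) \<le> (norm (Xa 0 - Xb 0) + 0) * exp (M + 1)"
  proof (rule energy[where E'="\<lambda>t. a t (Xa t) - a t (Xb t)", OF _ _ M0 _ t])
    show "((\<lambda>t. Xa t - Xb t) has_vector_derivative a t (Xa t) - a t (Xb t)) (at t within {0..1})"
      if "t \<in> {0..1}" for t by (intro has_vector_derivative_diff d1 d2 that)
    show "norm (a t (Xa t) - a t (Xb t)) \<le> M * norm (Xa t - Xb t) + 0" if "t \<in> {0..1}" for t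
      using M[OF that, of "Xa t - Xb t"] by (simp add: linear_diff[OF lin[OF that]])
  qed simp
  then show ?thesis using i by simp
qed

lemma linear_G2: "linear (G \<Gamma> T x)"
  using bilinear_G unfolding bilinear_def by blast

lemma ptrans_coeff:
  assumes conn: "connection \<Gamma>" and S: "S \<in> SPD"
  shows "\<And>t. t \<in> {0..1} \<Longrightarrow> linear (\<lambda>X. - G \<Gamma> (S + t *\<^sub>R (mat 1 - S)) (mat 1 - S) X)"
    and "\<And>X. continuous_on {0..1} (\<lambda>t. - G \<Gamma> (S + t *\<^sub>R (mat 1 - S)) (mat 1 - S) X)"
proof -
  show "linear (\<lambda>X. - G \<Gamma> (S + t *\<^sub>R (mat 1 - S)) (mat 1 - S) X)" for t
    by (rule linear_compose_neg[OF linear_G2])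
  show "continuous_on {0..1} (\<lambda>t. - G \<Gamma> (S + t *\<^sub>R (mat 1 - S)) (mat 1 - S) X)" for X
  proof -
    have "continuous_on {0..1} (\<lambda>t. G \<Gamma> (S + t *\<^sub>R (mat 1 - S)) (mat 1 - S) X)"
      by (rule continuous_on_compose2[OF G_cont[OF conn]]) (auto intro!: continuous_intros SPD_seg[OF S])
    then show ?thesis by (intro continuous_intros)
  qed
qed

lemma ptrans_exists:
  assumes conn: "connection \<Gamma>" and S: "S \<in> SPD"
  shows "\<exists>V. V 0 = X0 \<and> (\<forall>t\<in>{0..1}. (V has_vector_derivative - G \<Gamma> (S + t *\<^sub>R (mat 1 - S)) (mat 1 - S) (V t)) (at t within {0..1}))"
proof -
  have "\<exists>V. V 0 = X0 \<and> (\<forall>t\<in>{0..1}. (V has_vector_derivative (- G \<Gamma> (S + t *\<^sub>R (mat 1 - S)) (mat 1 - S) (V t)) + (\<lambda>_. 0) t) (at t within {0..1}))"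
    by (rule ode_exists) (auto intro: ptrans_coeff[OF conn S] continuous_on_const)
  then show ?thesis by simp
qed

lemma ptrans_char:
  assumes conn: "connection \<Gamma>" and S: "S \<in> SPD" and X0: "X0 \<in> Sym" and V0: "V 0 = X0"
  and dV: "\<And>t. t \<in> {0..1} \<Longrightarrow> (V has_vector_derivative - G \<Gamma> (S + t *\<^sub>R (mat 1 - S)) (mat 1 - S) (V t)) (at t within {0..1})"
  shows "ptrans_to_id \<Gamma> S X0 = V 1" and "\<And>t. t \<in> {0..1} \<Longrightarrow> V t \<in> Sym"
proof -
  let ?a = "\<lambda>t X. - G \<Gamma> (S + t *\<^sub>R (mat 1 - S)) (mat 1 - S) X"
  obtain M where M0: "M \<ge> 0" and M: "\<And>t x. t \<in> {0..1} \<Longrightarrow> norm (?a t x) \<le> M * norm x"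
    using lin_bound_unif[OF ptrans_coeff[OF conn S]] by blast
  have lin: "\<And>t. t \<in> {0..1} \<Longrightarrow> linear (?a t)" by (rule ptrans_coeff(1)[OF conn S])
  have VS: "V t \<in> Sym" if t: "t \<in> {0..1}" for t
  proof -
    have "transpose (V t) = V t"
    proof (rule ode_unique[where a="?a" and Xa="\<lambda>t. transpose (V t)" and Xb=V and M=M])
      show "\<And>t. t \<in> {0..1} \<Longrightarrow> linear (?a t)" by (rule lin)
      show "\<And>t x. t \<in> {0..1} \<Longrightarrow> norm (?a t x) \<le> M * norm x" by (rule M)
      show "0 \<le> M" by (rule M0)
      show "t \<in> {0..1}" by (rule t)
      show "\<And>t. t \<in> {0..1} \<Longrightarrow> (V has_vector_derivative ?a t (V t)) (at t within {0..1})" by (rule dV)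
      show "transpose (V 0) = V 0" using V0 X0 by (simp add: Sym_def)
      fix t :: real assume t: "t \<in> {0..1}"
      have "((\<lambda>t. transpose (V t)) has_vector_derivative transpose (?a t (V t))) (at t within {0..1})"
        by (rule bounded_linear.has_vector_derivative[OF bounded_linear_transpose' dV[OF t]])
      moreover have "transpose (?a t (V t)) = ?a t (transpose (V t))"
        using G_in_Sym[OF conn SPD_seg[OF S t]] G_transpose[OF conn SPD_seg[OF S t]]
        by (simp add: transpose_uminus' Sym_def)
      ultimately show "((\<lambda>t. transpose (V t)) has_vector_derivative ?a t (transpose (V t))) (at t within {0..1})"
        by simp
    qed
    then show ?thesis by (simp add: Sym_def)
  qed
  then show "\<And>t. t \<in> {0..1} \<Longrightarrow> V t \<in> Sym" by blast
  show "ptrans_to_id \<Gamma> S X0 = V 1"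
    unfolding ptrans_to_id_def
  proof (rule the_equality)
    show "\<exists>V'. V' 0 = X0 \<and> V' 1 = V 1 \<and> (\<forall>t\<in>{0..1}. V' t \<in> Sym \<and>
        (V' has_vector_derivative - \<Gamma> (S + t *\<^sub>R (mat 1 - S)) (mat 1 - S) (V' t)) (at t within {0..1}))"
      using VS dV V0 G_Sym_eq[OF conn SPD_seg[OF S] _ VS] SPD_Sym[OF S]
      by (intro exI[of _ V]) (auto simp: Sym_diff)
    fix W assume "\<exists>V'. V' 0 = X0 \<and> V' 1 = W \<and> (\<forall>t\<in>{0..1}. V' t \<in> Sym \<and>
        (V' has_vector_derivative - \<Gamma> (S + t *\<^sub>R (mat 1 - S)) (mat 1 - S) (V' t)) (at t within {0..1}))"
    then obtain V' where V': "V' 0 = X0" "V' 1 = W" "\<And>t. t \<in> {0..1} \<Longrightarrow> V' t \<in> Sym"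
      "\<And>t. t \<in> {0..1} \<Longrightarrow> (V' has_vector_derivative - \<Gamma> (S + t *\<^sub>R (mat 1 - S)) (mat 1 - S) (V' t)) (at t within {0..1})"
      by blast
    have "V' 1 = V 1"
    proof (rule ode_unique[where a="?a" and Xa=V' and Xb=V and M=M])
      show "\<And>t. t \<in> {0..1} \<Longrightarrow> linear (?a t)" by (rule lin)
      show "\<And>t x. t \<in> {0..1} \<Longrightarrow> norm (?a t x) \<le> M * norm x" by (rule M)
      show "0 \<le> M" by (rule M0)
      fix t :: real assume t: "t \<in> {0..1}"
      have "G \<Gamma> (S + t *\<^sub>R (mat 1 - S)) (mat 1 - S) (V' t) = \<Gamma> (S + t *\<^sub>R (mat 1 - S)) (mat 1 - S) (V' t)"
        by (rule G_Sym_eq[OF conn SPD_seg[OF S t]]) (use SPD_Sym[OF S] V'(3)[OF t] in auto)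
      then show "(V' has_vector_derivative ?a t (V' t)) (at t within {0..1})" using V'(4)[OF t] by simp
    qed (use dV V0 V'(1) in auto)
    then show "W = V 1" using V'(2) by simp
  qed
qed



lemma bilin_bound2:
  fixes B :: "'a::euclidean_space \<Rightarrow> 'a \<Rightarrow> 'b::real_normed_vector"
  assumes "bilinear B"
  shows "norm (B x y) \<le> (\<Sum>i\<in>Basis. \<Sum>j\<in>Basis. norm (B i j)) * norm x * norm y"
proof -
  have l1: "linear (\<lambda>x. B x y)" for y using assms unfolding bilinear_def by blast
  have l2: "linear (B x)" for x using assms unfolding bilinear_def by blast
  have "norm (B x y) \<le> (\<Sum>i\<in>Basis. norm (B i y)) * norm x" by (rule lin_bound_basis[OF l1])
  also have "\<dots> \<le> ((\<Sum>i\<in>Basis. \<Sum>j\<in>Basis. norm (B i j)) * norm y) * norm x"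
  proof (rule mult_right_mono)
    have "(\<Sum>i\<in>Basis. norm (B i y)) \<le> (\<Sum>i\<in>Basis. (\<Sum>j\<in>Basis. norm (B i j)) * norm y)"
      by (intro sum_mono lin_bound_basis[OF l2])
    then show "(\<Sum>i\<in>Basis. norm (B i y)) \<le> (\<Sum>i\<in>Basis. \<Sum>j\<in>Basis. norm (B i j)) * norm y"
      by (simp add: sum_distrib_right)
  qed simp
  finally show ?thesis by (simp add: ac_simps)
qed

lemma bilinear_comb:
  assumes "bilinear B1" "bilinear B2" "bilinear B3"
  shows "bilinear (\<lambda>x y. B1 x y - B2 x y - c *\<^sub>R B3 x y)"
  using assms unfolding bilinear_def
  by (auto intro!: linear_compose_sub linear_compose_scale_right)

definition Pt :: "'n::finite mat \<Rightarrow> 'n mat \<Rightarrow> real \<Rightarrow> real \<Rightarrow> 'n mat" where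
  "Pt S v t r = S + t *\<^sub>R (mat 1 - S) + r *\<^sub>R v"

lemma Pt_compact: "compact ((\<lambda>p. Pt S v (fst p) (snd p)) ` ({0..1} \<times> {-\<delta>..\<delta>}))"
  unfolding Pt_def by (intro compact_continuous_image compact_Times compact_Icc continuous_intros)

lemma G_bounds:
  fixes S v :: "'n::finite mat"
  assumes conn: "connection \<Gamma>" and v: "v \<in> Sym"
    and HK: "\<And>t r. t \<in> {0..1} \<Longrightarrow> \<bar>r\<bar> \<le> \<delta> \<Longrightarrow> Pt S v t r \<in> SPD"
  shows "\<exists>MG MD. MG \<ge> 0 \<and> MD \<ge> 0 \<and> (\<forall>t\<in>{0..1}. \<forall>r. \<bar>r\<bar> \<le> \<delta> \<longrightarrow> (\<forall>x y.
      norm (G \<Gamma> (Pt S v t r) x y) \<le> MG * norm x * norm y \<and> norm (dG \<Gamma> (Pt S v t r) v x y) \<le> MD * norm x * norm y))"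
proof -
  let ?K = "(\<lambda>p. Pt S v (fst p) (snd p)) ` ({0..1} \<times> {-\<delta>..\<delta>})"
  have KS: "?K \<subseteq> SPD" using HK by auto
  have c1: "continuous_on ?K (\<lambda>T. \<Sum>i\<in>Basis. \<Sum>j\<in>Basis. norm (G \<Gamma> T i j))"
    by (intro continuous_intros continuous_on_subset[OF G_cont[OF conn] KS])
  have c2: "continuous_on ?K (\<lambda>T. \<Sum>i\<in>Basis. \<Sum>j\<in>Basis. norm (dG \<Gamma> T v i j))"
    by (intro continuous_intros continuous_on_subset[OF dG_cont[OF conn v] KS])
  obtain B1 where B1: "\<And>T. T \<in> ?K \<Longrightarrow> norm (\<Sum>i\<in>Basis. \<Sum>j\<in>Basis. norm (G \<Gamma> T i j)) \<le> B1"
    using compact_imp_bounded[OF compact_continuous_image[OF c1 Pt_compact]] unfolding bounded_iff by blast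
  obtain B2 where B2: "\<And>T. T \<in> ?K \<Longrightarrow> norm (\<Sum>i\<in>Basis. \<Sum>j\<in>Basis. norm (dG \<Gamma> T v i j)) \<le> B2"
    using compact_imp_bounded[OF compact_continuous_image[OF c2 Pt_compact]] unfolding bounded_iff by blast
  have "\<forall>t\<in>{0..1}. \<forall>r. \<bar>r\<bar> \<le> \<delta> \<longrightarrow> (\<forall>x y.
      norm (G \<Gamma> (Pt S v t r) x y) \<le> \<bar>B1\<bar> * norm x * norm y \<and> norm (dG \<Gamma> (Pt S v t r) v x y) \<le> \<bar>B2\<bar> * norm x * norm y)"
  proof (intro ballI allI impI conjI)
    fix t r :: real and x y :: "'n mat" assume t: "t \<in> {0..1}" and r: "\<bar>r\<bar> \<le> \<delta>"
    have K: "Pt S v t r \<in> ?K" using t r by (intro image_eqI[of _ _ "(t, r)"]) auto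
    have "norm (G \<Gamma> (Pt S v t r) x y) \<le> (\<Sum>i\<in>Basis. \<Sum>j\<in>Basis. norm (G \<Gamma> (Pt S v t r) i j)) * norm x * norm y"
      by (rule bilin_bound2[OF bilinear_G])
    also have "\<dots> \<le> \<bar>B1\<bar> * norm x * norm y"
      using B1[OF K] by (intro mult_right_mono) auto
    finally show "norm (G \<Gamma> (Pt S v t r) x y) \<le> \<bar>B1\<bar> * norm x * norm y" .
    have "norm (dG \<Gamma> (Pt S v t r) v x y) \<le> (\<Sum>i\<in>Basis. \<Sum>j\<in>Basis. norm (dG \<Gamma> (Pt S v t r) v i j)) * norm x * norm y"
      by (rule bilin_bound2[OF bilinear_dG])
    also have "\<dots> \<le> \<bar>B2\<bar> * norm x * norm y"
      using B2[OF K] by (intro mult_right_mono) auto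
    finally show "norm (dG \<Gamma> (Pt S v t r) v x y) \<le> \<bar>B2\<bar> * norm x * norm y" .
  qed
  then show ?thesis by (intro exI[of _ "\<bar>B1\<bar>"] exI[of _ "\<bar>B2\<bar>"]) auto
qed

lemma G_Pt_deriv:
  fixes S v :: "'n::finite mat"
  assumes conn: "connection \<Gamma>" and v: "v \<in> Sym" and P: "Pt S v t r \<in> SPD"
  shows "((\<lambda>r. G \<Gamma> (Pt S v t r) x y) has_vector_derivative dG \<Gamma> (Pt S v t r) v x y) (at r)"
proof -
  have "((\<lambda>h. G \<Gamma> ((S + t *\<^sub>R (mat 1 - S) + r *\<^sub>R v) + h *\<^sub>R v) x y) has_vector_derivative dG \<Gamma> (Pt S v t r) v x y) (at 0)"
    using G_line_deriv[OF conn P v] by (simp add: Pt_def)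
  then show ?thesis unfolding Pt_def by (rule line_shift)
qed

lemma G_taylor:
  fixes S v :: "'n::finite mat"
  assumes conn: "connection \<Gamma>" and v: "v \<in> Sym" and d: "\<delta> > 0"
    and HK: "\<And>t r. t \<in> {0..1} \<Longrightarrow> \<bar>r\<bar> \<le> \<delta> \<Longrightarrow> Pt S v t r \<in> SPD"
    and e: "e > 0"
  shows "\<exists>\<eta>>0. \<eta> \<le> \<delta> \<and> (\<forall>t\<in>{0..1}. \<forall>r. \<bar>r\<bar> \<le> \<eta> \<longrightarrow> (\<forall>x y.
      norm (G \<Gamma> (Pt S v t r) x y - G \<Gamma> (Pt S v t 0) x y - r *\<^sub>R dG \<Gamma> (Pt S v t 0) v x y) \<le> e * \<bar>r\<bar> * norm x * norm y))"
proof -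
  let ?K = "(\<lambda>p. Pt S v (fst p) (snd p)) ` ({0..1} \<times> {-\<delta>..\<delta>})"
  have KS: "?K \<subseteq> SPD" using HK by auto
  define nB where "nB = real (card (Basis :: ('n mat) set))"
  define e' where "e' = e / (nB * nB + 1)"
  have e': "e' > 0" using e by (simp add: e'_def nB_def add_pos_nonneg)
  have "\<forall>p\<in>Basis \<times> Basis. \<exists>d>0. \<forall>x\<in>?K. \<forall>x'\<in>?K. dist x' x < d \<longrightarrow>
      dist (dG \<Gamma> x' v (fst p) (snd p)) (dG \<Gamma> x v (fst p) (snd p)) < e'"
  proof
    fix p :: "('n mat) \<times> ('n mat)"
    have "uniformly_continuous_on ?K (\<lambda>T. dG \<Gamma> T v (fst p) (snd p))"
      by (rule compact_uniformly_continuous[OF continuous_on_subset[OF dG_cont[OF conn v] KS] Pt_compact])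
    then show "\<exists>d>0. \<forall>x\<in>?K. \<forall>x'\<in>?K. dist x' x < d \<longrightarrow>
      dist (dG \<Gamma> x' v (fst p) (snd p)) (dG \<Gamma> x v (fst p) (snd p)) < e'"
      unfolding uniformly_continuous_on_def using e' by blast
  qed
  then obtain dd' where dd'all: "\<forall>p\<in>Basis \<times> Basis. dd' p > 0 \<and> (\<forall>x\<in>?K. \<forall>x'\<in>?K. dist x' x < dd' p \<longrightarrow>
      dist (dG \<Gamma> x' v (fst p) (snd p)) (dG \<Gamma> x v (fst p) (snd p)) < e')"
    by (subst (asm) bchoice_iff) blast
  have dd': "\<And>p. p \<in> Basis \<times> Basis \<Longrightarrow> dd' p > 0"
    "\<And>p x x'. p \<in> Basis \<times> Basis \<Longrightarrow> x \<in> ?K \<Longrightarrow> x' \<in> ?K \<Longrightarrow> dist x' x < dd' p \<Longrightarrow>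
      dist (dG \<Gamma> x' v (fst p) (snd p)) (dG \<Gamma> x v (fst p) (snd p)) < e'"
    using dd'all by blast+
  define \<eta>0 where "\<eta>0 = Min (dd' ` (Basis \<times> Basis))"
  have fin: "finite (dd' ` (Basis \<times> Basis :: (('n mat) \<times> ('n mat)) set))" by simp
  have ne: "dd' ` (Basis \<times> Basis :: (('n mat) \<times> ('n mat)) set) \<noteq> {}" by simp
  have \<eta>0: "\<eta>0 > 0" unfolding \<eta>0_def using dd'(1) by (subst Min_gr_iff[OF fin ne]) auto
  have \<eta>0le: "\<eta>0 \<le> dd' p" if "p \<in> Basis \<times> Basis" for p
    unfolding \<eta>0_def using that fin by (intro Min_le) auto
  define \<eta> where "\<eta> = min \<delta> (\<eta>0 / (norm v + 1))"
  have nv: "norm v + 1 > 0" using norm_ge_zero[of v] by linarith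
  have \<eta>: "\<eta> > 0" "\<eta> \<le> \<delta>" using d \<eta>0 nv by (auto simp: \<eta>_def)
  have \<eta>v: "\<eta> * norm v < \<eta>0"
  proof -
    have "\<eta> * norm v \<le> \<eta>0 / (norm v + 1) * norm v" using \<eta> by (intro mult_right_mono) (auto simp: \<eta>_def)
    also have "\<dots> < \<eta>0" using \<eta>0 nv by (simp add: field_simps)
    finally show ?thesis .
  qed
  have pair: "norm (G \<Gamma> (Pt S v t r) i j - G \<Gamma> (Pt S v t 0) i j - r *\<^sub>R dG \<Gamma> (Pt S v t 0) v i j) \<le> e' * \<bar>r\<bar>"
    if t: "t \<in> {0..1}" and r: "\<bar>r\<bar> \<le> \<eta>" and ij: "i \<in> Basis" "j \<in> Basis" for t r i j
  proof -
    let ?seg = "closed_segment 0 r"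
    have segr: "\<bar>r'\<bar> \<le> \<bar>r\<bar>" if "r' \<in> ?seg" for r'
      using that by (auto simp: closed_segment_eq_real_ivl split: if_splits)
    have inK: "Pt S v t r' \<in> ?K" if "\<bar>r'\<bar> \<le> \<delta>" for r'
      using t that by (intro image_eqI[of _ _ "(t, r')"]) auto
    define \<phi> where "\<phi> r' = G \<Gamma> (Pt S v t r') i j - r' *\<^sub>R dG \<Gamma> (Pt S v t 0) v i j" for r'
    have "norm (\<phi> r - \<phi> 0) \<le> e' * norm (r - 0)"
    proof (rule differentiable_bound[where f' = "\<lambda>r' h. h *\<^sub>R (dG \<Gamma> (Pt S v t r') v i j - dG \<Gamma> (Pt S v t 0) v i j)"])
      show "convex ?seg" by simp
      show "0 \<in> ?seg" "r \<in> ?seg" by auto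
      fix r' assume r': "r' \<in> ?seg"
      have r'd: "\<bar>r'\<bar> \<le> \<delta>" using segr[OF r'] r \<eta> by simp
      have "(\<phi> has_vector_derivative (dG \<Gamma> (Pt S v t r') v i j - dG \<Gamma> (Pt S v t 0) v i j)) (at r')"
        unfolding \<phi>_def
        using has_vector_derivative_diff[OF G_Pt_deriv[OF conn v HK[OF t r'd]]
            has_vector_derivative_scaleR[OF DERIV_ident has_vector_derivative_const]]
        by simp
      then show "(\<phi> has_derivative (\<lambda>h. h *\<^sub>R (dG \<Gamma> (Pt S v t r') v i j - dG \<Gamma> (Pt S v t 0) v i j))) (at r' within ?seg)"
        unfolding has_vector_derivative_def by (rule has_derivative_at_withinI)
      have "dist (Pt S v t r') (Pt S v t 0) < dd' (i, j)"
      proof -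
        have "dist (Pt S v t r') (Pt S v t 0) = \<bar>r'\<bar> * norm v" by (simp add: Pt_def dist_norm)
        also have "\<dots> \<le> \<eta> * norm v" using segr[OF r'] r by (intro mult_right_mono) auto
        also have "\<dots> < \<eta>0" by (rule \<eta>v)
        also have "\<dots> \<le> dd' (i, j)" using ij by (intro \<eta>0le) auto
        finally show ?thesis .
      qed
      then have "dist (dG \<Gamma> (Pt S v t r') v i j) (dG \<Gamma> (Pt S v t 0) v i j) < e'"
        using dd'(2)[of "(i, j)" "Pt S v t 0" "Pt S v t r'"] ij inK[OF r'd] inK[of 0] d by auto
      then show "onorm (\<lambda>h. h *\<^sub>R (dG \<Gamma> (Pt S v t r') v i j - dG \<Gamma> (Pt S v t 0) v i j)) \<le> e'"
        by (simp add: onorm_scaleR_left[OF bounded_linear_ident] onorm_id dist_norm)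
    qed
    then show ?thesis by (simp add: \<phi>_def algebra_simps)
  qed
  show ?thesis
  proof (intro exI[of _ \<eta>] conjI \<eta> ballI allI impI)
    fix t r :: real and x y :: "'n mat" assume t: "t \<in> {0..1}" and r: "\<bar>r\<bar> \<le> \<eta>"
    let ?B = "\<lambda>x y. G \<Gamma> (Pt S v t r) x y - G \<Gamma> (Pt S v t 0) x y - r *\<^sub>R dG \<Gamma> (Pt S v t 0) v x y"
    have "norm (?B x y) \<le> (\<Sum>i\<in>Basis. \<Sum>j\<in>Basis. norm (?B i j)) * norm x * norm y"
      by (rule bilin_bound2[OF bilinear_comb[OF bilinear_G bilinear_G bilinear_dG]])
    also have "(\<Sum>i\<in>Basis. \<Sum>j\<in>Basis. norm (?B i j)) \<le> (\<Sum>i\<in>(Basis::('n mat) set). \<Sum>j\<in>(Basis::('n mat) set). e' * \<bar>r\<bar>)"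
      by (intro sum_mono pair[OF t r])
    also have "\<dots> = nB * nB * e' * \<bar>r\<bar>" by (simp add: nB_def)
    also have "\<dots> \<le> e * \<bar>r\<bar>"
    proof -
      have p: "nB * nB + 1 > 0" by (simp add: add_nonneg_pos)
      have q: "nB * nB / (nB * nB + 1) \<le> 1" using p by (simp add: divide_le_eq)
      have "nB * nB * e' = e * (nB * nB / (nB * nB + 1))" by (simp add: e'_def)
      also have "\<dots> \<le> e * 1" using e q by (intro mult_left_mono) auto
      finally have "nB * nB * e' \<le> e" by simp
      then show ?thesis by (intro mult_right_mono) auto
    qed
    finally show "norm (?B x y) \<le> e * \<bar>r\<bar> * norm x * norm y"
      by (simp add: mult_right_mono mult.assoc)
  qed
qed



lemma eq_from0: "(a::'a::ab_group_add) - b + c - d = 0 \<Longrightarrow> a = b - c + d"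
  by (simp add: algebra_simps)

lemma deriv_Sym:
  fixes w :: "real \<Rightarrow> 'n::finite mat"
  assumes wS: "\<And>s. \<bar>s\<bar> < \<delta>0 \<Longrightarrow> w s \<in> Sym" and \<delta>0: "\<delta>0 > 0" and wd: "(w has_vector_derivative w') (at 0)"
  shows "w' \<in> Sym"
proof -
  have "((\<lambda>s. transpose (w s)) has_vector_derivative transpose w') (at 0)"
    by (rule bounded_linear.has_vector_derivative[OF bounded_linear_transpose' wd])
  moreover have "((\<lambda>s. transpose (w s)) has_vector_derivative w') (at 0 within UNIV)"
    by (rule has_vector_derivative_transform_within[OF wd \<delta>0]) (use wS in \<open>auto simp: dist_real_def Sym_def\<close>)
  ultimately show ?thesis using vector_derivative_unique_at by (auto simp: Sym_def)
qed

lemma ptrans_deriv: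
  fixes S v :: "'n::finite mat" and w :: "real \<Rightarrow> 'n mat"
  assumes conn: "connection \<Gamma>" and cf: "curvature_free \<Gamma>"
  and S: "S \<in> SPD" and v: "v \<in> Sym"
  and \<delta>0: "\<delta>0 > 0" and wS: "\<And>s. \<bar>s\<bar> < \<delta>0 \<Longrightarrow> w s \<in> Sym"
  and wd: "(w has_vector_derivative w') (at 0)"
  shows "((\<lambda>s. ptrans_to_id \<Gamma> (S + s *\<^sub>R v) (w s)) has_vector_derivative ptrans_to_id \<Gamma> S (w' + \<Gamma> S v (w 0))) (at 0)"
proof -
  define A0 where "A0 = mat 1 - S"
  have A0S: "A0 \<in> Sym" using SPD_Sym[OF S] by (simp add: A0_def Sym_diff)
  obtain \<delta>1 where \<delta>1: "\<delta>1 > 0" and HK1: "\<And>t r. t \<in> {0..1} \<Longrightarrow> \<bar>r\<bar> \<le> \<delta>1 \<Longrightarrow> Pt S v t r \<in> SPD"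
    using SPD_pts[OF S v] unfolding Pt_def by blast
  have wlim: "\<forall>e>0. \<exists>d>0. \<forall>y. norm (y - 0) < d \<longrightarrow> norm (w y - w 0 - (y - 0) *\<^sub>R w') \<le> e * norm (y - 0)"
    using wd unfolding has_vector_derivative_def has_derivative_at_alt by blast
  obtain dw where dw: "dw > 0" "\<And>y. \<bar>y\<bar> < dw \<Longrightarrow> norm (w y - w 0 - y *\<^sub>R w') \<le> 1 * \<bar>y\<bar>"
    using wlim[rule_format, OF zero_less_one] by auto
  obtain \<eta>1 where \<eta>1: "\<eta>1 > 0" "\<eta>1 \<le> \<delta>1" and tay1: "\<forall>t\<in>{0..1}. \<forall>r. \<bar>r\<bar> \<le> \<eta>1 \<longrightarrow> (\<forall>x y.
      norm (G \<Gamma> (Pt S v t r) x y - G \<Gamma> (Pt S v t 0) x y - r *\<^sub>R dG \<Gamma> (Pt S v t 0) v x y) \<le> 1 * \<bar>r\<bar> * norm x * norm y)"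
    using G_taylor[OF conn v \<delta>1 HK1 zero_less_one] by blast
  define \<delta> where "\<delta> = min (min \<eta>1 (dw/2)) (\<delta>0/2)"
  have \<delta>: "\<delta> > 0" "\<delta> \<le> \<eta>1" "\<delta> \<le> \<delta>1" "\<delta> < dw" "\<delta> < \<delta>0"
    using \<eta>1 dw \<delta>0 by (auto simp: \<delta>_def)
  have HK: "\<And>t r. t \<in> {0..1} \<Longrightarrow> \<bar>r\<bar> \<le> \<delta> \<Longrightarrow> Pt S v t r \<in> SPD" using HK1 \<delta> by auto
  obtain MG MD where MG: "MG \<ge> 0" and MD: "MD \<ge> 0" and bnds: "\<forall>t\<in>{0..1}. \<forall>r. \<bar>r\<bar> \<le> \<delta> \<longrightarrow> (\<forall>x y.
      norm (G \<Gamma> (Pt S v t r) x y) \<le> MG * norm x * norm y \<and> norm (dG \<Gamma> (Pt S v t r) v x y) \<le> MD * norm x * norm y)"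
    using G_bounds[OF conn v HK] by blast
  have Gb: "norm (G \<Gamma> (Pt S v t r) x y) \<le> MG * norm x * norm y" if "t \<in> {0..1}" "\<bar>r\<bar> \<le> \<delta>" for t r x y
    using bnds that by blast
  have dGb: "norm (dG \<Gamma> (Pt S v t r) v x y) \<le> MD * norm x * norm y" if "t \<in> {0..1}" "\<bar>r\<bar> \<le> \<delta>" for t r x y
    using bnds that by blast
  have tay1': "norm (G \<Gamma> (Pt S v t r) x y - G \<Gamma> (Pt S v t 0) x y - r *\<^sub>R dG \<Gamma> (Pt S v t 0) v x y) \<le> \<bar>r\<bar> * norm x * norm y"
    if "t \<in> {0..1}" "\<bar>r\<bar> \<le> \<delta>" for t r x y
    using tay1 that \<delta> by auto
  have rs: "\<bar>s * (1 - t)\<bar> \<le> \<bar>s\<bar>" if "t \<in> {0..1}" for s t :: real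
    using that by (auto simp: abs_mult intro!: mult_left_le)
  define a where "a s t X = - G \<Gamma> ((S + s *\<^sub>R v) + t *\<^sub>R (mat 1 - (S + s *\<^sub>R v))) (mat 1 - (S + s *\<^sub>R v)) X" for s t X
  have aP: "a s t X = - G \<Gamma> (Pt S v t (s * (1 - t))) (A0 - s *\<^sub>R v) X" for s t X
    unfolding a_def Pt_def A0_def by (simp add: algebra_simps)
  have a0: "a 0 t X = - G \<Gamma> (S + t *\<^sub>R (mat 1 - S)) (mat 1 - S) X" for t X by (simp add: a_def)
  have a0P: "a 0 t X = - G \<Gamma> (Pt S v t 0) A0 X" for t X by (simp add: aP)
  have Ssv: "S + s *\<^sub>R v \<in> SPD" if "\<bar>s\<bar> \<le> \<delta>" for s using HK[of 0 s] that by (simp add: Pt_def)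
  have alin: "linear (a s t)" for s t
    unfolding a_def[abs_def] by (rule linear_compose_neg[OF linear_G2])
  have "\<forall>s\<in>{-\<delta>..\<delta>}. \<exists>V. V 0 = w s \<and> (\<forall>t\<in>{0..1}. (V has_vector_derivative a s t (V t)) (at t within {0..1}))"
  proof
    fix s assume "s \<in> {-\<delta>..\<delta>}"
    then have "\<bar>s\<bar> \<le> \<delta>" by auto
    then show "\<exists>V. V 0 = w s \<and> (\<forall>t\<in>{0..1}. (V has_vector_derivative a s t (V t)) (at t within {0..1}))"
      using ptrans_exists[OF conn Ssv, of s "w s"] unfolding a_def by blast
  qed
  then obtain U where Uall: "\<forall>s\<in>{-\<delta>..\<delta>}. U s 0 = w s \<and> (\<forall>t\<in>{0..1}. (U s has_vector_derivative a s t (U s t)) (at t within {0..1}))"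
    by (subst (asm) bchoice_iff) blast
  have U0: "U s 0 = w s" if "\<bar>s\<bar> \<le> \<delta>" for s using Uall that by (auto simp: abs_le_iff)
  have Ud: "(U s has_vector_derivative a s t (U s t)) (at t within {0..1})" if "\<bar>s\<bar> \<le> \<delta>" "t \<in> {0..1}" for s t
    using Uall that by (auto simp: abs_le_iff)
  have wSd: "w s \<in> Sym" if "\<bar>s\<bar> \<le> \<delta>" for s using wS that \<delta> by auto
  have Uptr: "ptrans_to_id \<Gamma> (S + s *\<^sub>R v) (w s) = U s 1" if "\<bar>s\<bar> \<le> \<delta>" for s
    by (rule ptrans_char(1)[where V="U s", OF conn Ssv[OF that] wSd[OF that] U0[OF that]]) (use Ud[OF that] in \<open>simp add: a_def\<close>)
  have USym: "U s t \<in> Sym" if "\<bar>s\<bar> \<le> \<delta>" "t \<in> {0..1}" for s t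
    by (rule ptrans_char(2)[where V="U s", OF conn Ssv[OF that(1)] wSd[OF that(1)] U0[OF that(1)]]) (use Ud[OF that(1)] that(2) in \<open>simp_all add: a_def\<close>)
  have w'S: "w' \<in> Sym" by (rule deriv_Sym[OF wS \<delta>0 wd])
  define J0 where "J0 = w' + G \<Gamma> S v (w 0)"
  have J0S: "J0 \<in> Sym" unfolding J0_def using G_in_Sym[OF conn S] w'S by auto
  have J0eq: "w' + \<Gamma> S v (w 0) = J0" unfolding J0_def using G_Sym_eq[OF conn S v wSd[of 0]] \<delta> by simp
  obtain J where J0: "J 0 = J0" and Jd': "\<forall>t\<in>{0..1}. (J has_vector_derivative - G \<Gamma> (S + t *\<^sub>R (mat 1 - S)) (mat 1 - S) (J t)) (at t within {0..1})"
    using ptrans_exists[OF conn S, of J0] by blast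
  have Jd: "(J has_vector_derivative a 0 t (J t)) (at t within {0..1})" if "t \<in> {0..1}" for t
    using Jd' that by (simp add: a0)
  have Jptr: "ptrans_to_id \<Gamma> S (w' + \<Gamma> S v (w 0)) = J 1"
    unfolding J0eq by (rule ptrans_char(1)[where V=J, OF conn S J0S J0]) (use Jd' in simp)
  define Ma where "Ma = MG * (norm A0 + \<delta> * norm v)"
  have Ma0: "Ma \<ge> 0" using MG \<delta> by (simp add: Ma_def)
  have Mab: "norm (a s t X) \<le> Ma * norm X" if "\<bar>s\<bar> \<le> \<delta>" "t \<in> {0..1}" for s t X
  proof -
    have "norm (a s t X) \<le> MG * norm (A0 - s *\<^sub>R v) * norm X"
      unfolding aP norm_minus_cancel using that rs[OF that(2), of s] by (intro Gb) auto
    also have "\<dots> \<le> MG * (norm A0 + \<delta> * norm v) * norm X"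
    proof -
      have "norm (A0 - s *\<^sub>R v) \<le> norm A0 + \<bar>s\<bar> * norm v" using norm_triangle_ineq4[of A0 "s *\<^sub>R v"] by simp
      also have "\<dots> \<le> norm A0 + \<delta> * norm v" using that by (intro add_left_mono mult_right_mono) auto
      finally show ?thesis using MG by (intro mult_right_mono mult_left_mono) auto
    qed
    finally show ?thesis by (simp add: Ma_def)
  qed
  define Wb where "Wb = norm (w 0) + (norm w' + 1) * \<delta>"
  have wdiff: "norm (w s - w 0) \<le> (norm w' + 1) * \<bar>s\<bar>" if "\<bar>s\<bar> \<le> \<delta>" for s
  proof -
    have "norm (w s - w 0 - s *\<^sub>R w') \<le> \<bar>s\<bar>" using dw(2)[of s] that \<delta> by simp
    then have "norm (w s - w 0) \<le> \<bar>s\<bar> + norm (s *\<^sub>R w')" using norm_triangle_sub[of "w s - w 0" "s *\<^sub>R w'"] by simp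
    then show ?thesis by (simp add: algebra_simps)
  qed
  have wb: "norm (w s) \<le> Wb" if "\<bar>s\<bar> \<le> \<delta>" for s
  proof -
    have "norm (w s) \<le> norm (w 0) + norm (w s - w 0)" using norm_triangle_sub[of "w s" "w 0"] by simp
    also have "\<dots> \<le> norm (w 0) + (norm w' + 1) * \<delta>" using wdiff[OF that] that
      by (smt (verit) mult_left_mono norm_ge_zero)
    finally show ?thesis by (simp add: Wb_def)
  qed
  define Ub where "Ub = Wb * exp (Ma + 1)"
  have Ubnd: "norm (U s t) \<le> Ub" if "\<bar>s\<bar> \<le> \<delta>" "t \<in> {0..1}" for s t
  proof -
    have "norm (U s t) \<le> (norm (U s 0) + 0) * exp (Ma + 1)"
      by (rule energy[OF Ud[OF that(1)] _ Ma0 _ that(2)]) (use Mab[OF that(1)] in auto)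
    also have "\<dots> \<le> Ub" unfolding Ub_def U0[OF that(1)] using wb[OF that(1)] by simp
    finally show ?thesis .
  qed
  have Glip: "norm (G \<Gamma> (Pt S v t r) x y - G \<Gamma> (Pt S v t 0) x y) \<le> (1 + MD) * \<bar>r\<bar> * norm x * norm y"
    if t: "t \<in> {0..1}" and r: "\<bar>r\<bar> \<le> \<delta>" for t r x y
  proof -
    have "norm (G \<Gamma> (Pt S v t r) x y - G \<Gamma> (Pt S v t 0) x y)
        \<le> norm (G \<Gamma> (Pt S v t r) x y - G \<Gamma> (Pt S v t 0) x y - r *\<^sub>R dG \<Gamma> (Pt S v t 0) v x y) + norm (r *\<^sub>R dG \<Gamma> (Pt S v t 0) v x y)"
      by (metis diff_add_cancel norm_triangle_ineq)
    also have "\<dots> \<le> \<bar>r\<bar> * norm x * norm y + \<bar>r\<bar> * (MD * norm x * norm y)"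
      using tay1'[OF t r, of x y] dGb[OF t, of 0 x y] \<delta> by (intro add_mono) (auto intro: mult_left_mono)
    finally show ?thesis by (simp add: algebra_simps)
  qed
  define C2 where "C2 = (1 + MD) * norm A0 + MG * norm v"
  have C2: "C2 \<ge> 0" using MD MG by (simp add: C2_def)
  have alip: "norm (a s t X - a 0 t X) \<le> C2 * \<bar>s\<bar> * norm X" if s: "\<bar>s\<bar> \<le> \<delta>" and t: "t \<in> {0..1}" for s t X
  proof -
    let ?r = "s * (1 - t)"
    have r: "\<bar>?r\<bar> \<le> \<delta>" "\<bar>?r\<bar> \<le> \<bar>s\<bar>" using rs[OF t, of s] s by auto
    have eq: "a s t X - a 0 t X = - (G \<Gamma> (Pt S v t ?r) A0 X - G \<Gamma> (Pt S v t 0) A0 X) + s *\<^sub>R G \<Gamma> (Pt S v t ?r) v X"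
      unfolding aP a0P by (simp add: bilinear_lsub[OF bilinear_G] bilinear_lmul[OF bilinear_G])
    have "norm (a s t X - a 0 t X) \<le> norm (G \<Gamma> (Pt S v t ?r) A0 X - G \<Gamma> (Pt S v t 0) A0 X) + norm (s *\<^sub>R G \<Gamma> (Pt S v t ?r) v X)"
      unfolding eq using norm_triangle_ineq[of "- (G \<Gamma> (Pt S v t ?r) A0 X - G \<Gamma> (Pt S v t 0) A0 X)" "s *\<^sub>R G \<Gamma> (Pt S v t ?r) v X"]
      by (simp only: norm_minus_cancel)
    also have "\<dots> \<le> (1 + MD) * \<bar>s\<bar> * norm A0 * norm X + \<bar>s\<bar> * (MG * norm v * norm X)"
    proof (rule add_mono)
      have "norm (G \<Gamma> (Pt S v t ?r) A0 X - G \<Gamma> (Pt S v t 0) A0 X) \<le> (1 + MD) * \<bar>?r\<bar> * norm A0 * norm X"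
        by (rule Glip[OF t r(1)])
      also have "\<dots> \<le> (1 + MD) * \<bar>s\<bar> * norm A0 * norm X"
        using r(2) MD by (intro mult_right_mono mult_left_mono) auto
      finally show "norm (G \<Gamma> (Pt S v t ?r) A0 X - G \<Gamma> (Pt S v t 0) A0 X) \<le> (1 + MD) * \<bar>s\<bar> * norm A0 * norm X" .
      show "norm (s *\<^sub>R G \<Gamma> (Pt S v t ?r) v X) \<le> \<bar>s\<bar> * (MG * norm v * norm X)"
        using Gb[OF t r(1), of v X] by (simp add: mult_left_mono)
    qed
    also have "\<dots> = C2 * \<bar>s\<bar> * norm X" by (simp add: C2_def algebra_simps)
    finally show ?thesis .
  qed
  define C1 where "C1 = ((norm w' + 1) + C2 * Ub) * exp (Ma + 1)"
  have Ulip: "norm (U s t - U 0 t) \<le> C1 * \<bar>s\<bar>" if s: "\<bar>s\<bar> \<le> \<delta>" and t: "t \<in> {0..1}" for s t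
  proof -
    have z: "\<bar>0::real\<bar> \<le> \<delta>" using \<delta> by simp
    have "norm (U s t - U 0 t) \<le> (norm (U s 0 - U 0 0) + C2 * \<bar>s\<bar> * Ub) * exp (Ma + 1)"
    proof (rule energy[where E'="\<lambda>t. a s t (U s t) - a 0 t (U 0 t)", OF _ _ Ma0 _ t])
      show "((\<lambda>t. U s t - U 0 t) has_vector_derivative a s t (U s t) - a 0 t (U 0 t)) (at t within {0..1})"
        if "t \<in> {0..1}" for t by (intro has_vector_derivative_diff Ud s z that)
      have "norm (U 0 0) \<le> Ub" using \<delta> by (intro Ubnd) auto
      then have Ub0: "0 \<le> Ub" using norm_ge_zero[of "U 0 0"] by linarith
      show "0 \<le> C2 * \<bar>s\<bar> * Ub" using C2 Ub0 by (intro mult_nonneg_nonneg) auto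
      fix t :: real assume t: "t \<in> {0..1}"
      have "a s t (U s t) - a 0 t (U 0 t) = a 0 t (U s t - U 0 t) + (a s t (U s t) - a 0 t (U s t))"
        by (simp add: linear_diff[OF alin])
      then have "norm (a s t (U s t) - a 0 t (U 0 t)) \<le> norm (a 0 t (U s t - U 0 t)) + norm (a s t (U s t) - a 0 t (U s t))"
        by (metis norm_triangle_ineq)
      also have "\<dots> \<le> Ma * norm (U s t - U 0 t) + C2 * \<bar>s\<bar> * Ub"
      proof (rule add_mono)
        show "norm (a 0 t (U s t - U 0 t)) \<le> Ma * norm (U s t - U 0 t)" by (rule Mab[OF z t])
        have "C2 * \<bar>s\<bar> * norm (U s t) \<le> C2 * \<bar>s\<bar> * Ub" using Ubnd[OF s t] C2 by (intro mult_left_mono) auto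
        then show "norm (a s t (U s t) - a 0 t (U s t)) \<le> C2 * \<bar>s\<bar> * Ub"
          using alip[OF s t, of "U s t"] by linarith
      qed
      finally show "norm (a s t (U s t) - a 0 t (U 0 t)) \<le> Ma * norm (U s t - U 0 t) + C2 * \<bar>s\<bar> * Ub" .
    qed
    also have "\<dots> \<le> ((norm w' + 1) * \<bar>s\<bar> + C2 * \<bar>s\<bar> * Ub) * exp (Ma + 1)"
      using wdiff[OF s] U0[OF s] U0[OF z] by (intro mult_right_mono add_right_mono) auto
    also have "\<dots> = C1 * \<bar>s\<bar>" by (simp add: C1_def algebra_simps)
    finally show ?thesis .
  qed
  have Pt0: "Pt S v t 0 = S + t *\<^sub>R A0" for t by (simp add: Pt_def A0_def)
  have Pt0S: "Pt S v t 0 \<in> SPD" if "t \<in> {0..1}" for t using HK[OF that, of 0] \<delta> by simp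
  have gd: "((\<lambda>r. G \<Gamma> (Pt S v r 0) x y) has_vector_derivative dG \<Gamma> (Pt S v t 0) A0 x y) (at t)"
    if t: "t \<in> {0..1}" for t x y
  proof -
    have "((\<lambda>h. G \<Gamma> ((S + t *\<^sub>R A0) + h *\<^sub>R A0) x y) has_vector_derivative dG \<Gamma> (S + t *\<^sub>R A0) A0 x y) (at 0)"
      using G_line_deriv[OF conn Pt0S[OF t, unfolded Pt0] A0S] .
    then have "((\<lambda>r. G \<Gamma> (S + r *\<^sub>R A0) x y) has_vector_derivative dG \<Gamma> (S + t *\<^sub>R A0) A0 x y) (at t)"
      by (rule line_shift)
    then show ?thesis unfolding Pt0 .
  qed
  have linear_dG2: "linear (dG \<Gamma> T u x)" for T u x using bilinear_dG unfolding bilinear_def by blast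
  define \<phi> where "\<phi> t = G \<Gamma> (Pt S v t 0) v (U 0 t)" for t
  have z: "\<bar>0::real\<bar> \<le> \<delta>" using \<delta> by simp
  have \<phi>d: "(\<phi> has_vector_derivative (dG \<Gamma> (Pt S v t 0) A0 v (U 0 t) + G \<Gamma> (Pt S v t 0) v (a 0 t (U 0 t)))) (at t within {0..1})"
    if t: "t \<in> {0..1}" for t
  proof -
    have e: "\<phi> r = (\<Sum>j\<in>Basis. (U 0 r \<bullet> j) *\<^sub>R G \<Gamma> (Pt S v r 0) v j)" for r
      unfolding \<phi>_def by (rule lin_expand[OF linear_G2])
    have ij: "((\<lambda>r. U 0 r \<bullet> j) has_real_derivative (a 0 t (U 0 t) \<bullet> j)) (at t within {0..1})" for j
      unfolding has_real_derivative_iff_has_vector_derivative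
      by (rule bounded_linear.has_vector_derivative[OF bounded_linear_inner_left Ud[OF z t]])
    have "((\<lambda>r. \<Sum>j\<in>Basis. (U 0 r \<bullet> j) *\<^sub>R G \<Gamma> (Pt S v r 0) v j) has_vector_derivative
        (\<Sum>j\<in>Basis. (U 0 t \<bullet> j) *\<^sub>R dG \<Gamma> (Pt S v t 0) A0 v j + (a 0 t (U 0 t) \<bullet> j) *\<^sub>R G \<Gamma> (Pt S v t 0) v j)) (at t within {0..1})"
      by (intro has_vector_derivative_sum has_vector_derivative_scaleR ij has_vector_derivative_at_within[OF gd[OF t]])
    moreover have "(\<Sum>j\<in>Basis. (U 0 t \<bullet> j) *\<^sub>R dG \<Gamma> (Pt S v t 0) A0 v j + (a 0 t (U 0 t) \<bullet> j) *\<^sub>R G \<Gamma> (Pt S v t 0) v j)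
        = dG \<Gamma> (Pt S v t 0) A0 v (U 0 t) + G \<Gamma> (Pt S v t 0) v (a 0 t (U 0 t))"
      by (simp add: sum.distrib lin_expand[OF linear_dG2, symmetric] lin_expand[OF linear_G2, symmetric])
    ultimately show ?thesis unfolding e by simp
  qed
  define D where "D t = J t - (1 - t) *\<^sub>R \<phi> t" for t
  define Gf where "Gf t = G \<Gamma> (Pt S v t 0) v (U 0 t) - (1 - t) *\<^sub>R dG \<Gamma> (Pt S v t 0) v A0 (U 0 t)" for t
  have Dd: "(D has_vector_derivative a 0 t (D t) + Gf t) (at t within {0..1})" if t: "t \<in> {0..1}" for t
  proof -
    have om: "((\<lambda>t. 1 - t) has_real_derivative -1) (at t within {0..1})"
      by (auto intro!: derivative_eq_intros)
    have "(D has_vector_derivative a 0 t (J t) - ((1 - t) *\<^sub>R (dG \<Gamma> (Pt S v t 0) A0 v (U 0 t) + G \<Gamma> (Pt S v t 0) v (a 0 t (U 0 t))) + (-1) *\<^sub>R \<phi> t)) (at t within {0..1})"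
      unfolding D_def[abs_def] by (intro has_vector_derivative_diff Jd t has_vector_derivative_scaleR om \<phi>d)
    moreover have "a 0 t (J t) - ((1 - t) *\<^sub>R (dG \<Gamma> (Pt S v t 0) A0 v (U 0 t) + G \<Gamma> (Pt S v t 0) v (a 0 t (U 0 t))) + (-1) *\<^sub>R \<phi> t)
        = a 0 t (D t) + Gf t"
    proof -
      let ?P = "Pt S v t 0" and ?U = "U 0 t"
      have curv: "dG \<Gamma> ?P A0 v ?U - dG \<Gamma> ?P v A0 ?U + G \<Gamma> ?P A0 (G \<Gamma> ?P v ?U) - G \<Gamma> ?P v (G \<Gamma> ?P A0 ?U) = 0"
        by (rule curv_G[OF conn cf Pt0S[OF t] A0S v USym[OF z t]])
      then have cv: "dG \<Gamma> ?P A0 v ?U = dG \<Gamma> ?P v A0 ?U - G \<Gamma> ?P A0 (G \<Gamma> ?P v ?U) + G \<Gamma> ?P v (G \<Gamma> ?P A0 ?U)"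
        by (rule eq_from0)
      show ?thesis
        unfolding a0P D_def Gf_def \<phi>_def cv
        by (simp add: bilinear_rsub[OF bilinear_G] bilinear_rmul[OF bilinear_G] bilinear_rneg[OF bilinear_G] bilinear_radd[OF bilinear_G] algebra_simps)
    qed
    ultimately show ?thesis by simp
  qed
  have D0: "D 0 = w'"
  proof -
    have "Pt S v 0 0 = S" by (simp add: Pt_def)
    then show ?thesis unfolding D_def \<phi>_def using J0 U0[OF z] by (simp add: J0_def)
  qed
  have Dval: "ptrans_to_id \<Gamma> S (w' + \<Gamma> S v (w 0)) = D 1" using Jptr by (simp add: D_def)
  have main: "\<exists>d>0. \<forall>s. \<bar>s\<bar> < d \<longrightarrow> norm (U s 1 - U 0 1 - s *\<^sub>R D 1) \<le> e * \<bar>s\<bar>" if e: "e > 0" for e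
  proof -
    define K0 where "K0 = exp (Ma + 1)"
    have K0: "K0 > 0" by (simp add: K0_def)
    define e1 where "e1 = e / (2 * K0)"
    have e1: "e1 > 0" using e K0 by (simp add: e1_def)
    define eT where "eT = min 1 (e1 / (2 * (norm A0 * Ub + 1)))"
    have Ub0: "0 \<le> Ub"
    proof -
      have "norm (U 0 0) \<le> Ub" using \<delta> by (intro Ubnd) auto
      then show ?thesis using norm_ge_zero[of "U 0 0"] by linarith
    qed
    have nAU: "norm A0 * Ub + 1 > 0" using Ub0 by (simp add: add_nonneg_pos)
    have eT: "eT > 0" "eT \<le> 1" using e1 nAU by (auto simp: eT_def)
    have eTb: "eT * (norm A0 * Ub) \<le> e1 / 2"
    proof -
      have "eT * (norm A0 * Ub) \<le> e1 / (2 * (norm A0 * Ub + 1)) * (norm A0 * Ub)"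
        using Ub0 by (intro mult_right_mono) (auto simp: eT_def)
      also have "\<dots> \<le> e1 / 2" using nAU e1 Ub0 by (simp add: field_simps)
      finally show ?thesis .
    qed
    obtain \<eta>T where \<eta>T: "\<eta>T > 0" and tayT: "\<forall>t\<in>{0..1}. \<forall>r. \<bar>r\<bar> \<le> \<eta>T \<longrightarrow> (\<forall>x y.
        norm (G \<Gamma> (Pt S v t r) x y - G \<Gamma> (Pt S v t 0) x y - r *\<^sub>R dG \<Gamma> (Pt S v t 0) v x y) \<le> eT * \<bar>r\<bar> * norm x * norm y)"
      using G_taylor[OF conn v \<delta>1 HK1 eT(1)] by blast
    define K2 where "K2 = MD * norm A0 * C1 + (1 + MD) * norm v * Ub + MG * norm v * C1"
    have C10: "C1 \<ge> 0" unfolding C1_def using C2 Ub0 by (intro mult_nonneg_nonneg add_nonneg_nonneg) auto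
    have K2: "K2 \<ge> 0" unfolding K2_def using MD MG C10 Ub0 by (intro add_nonneg_nonneg mult_nonneg_nonneg) auto
    obtain dw1 where dw1: "dw1 > 0" "\<And>y. \<bar>y\<bar> < dw1 \<Longrightarrow> norm (w y - w 0 - y *\<^sub>R w') \<le> e1 * \<bar>y\<bar>"
      using wlim[rule_format, OF e1] by auto
    define d where "d = min (min \<delta> \<eta>T) (min dw1 (e1 / (2 * (K2 + 1))))"
    have d: "d > 0" using \<delta> \<eta>T dw1 e1 K2 by (auto simp: d_def add_nonneg_pos)
    show ?thesis
    proof (intro exI[of _ d] conjI d allI impI)
      fix s :: real assume sd: "\<bar>s\<bar> < d"
      have s: "\<bar>s\<bar> \<le> \<delta>" "\<bar>s\<bar> \<le> \<eta>T" "\<bar>s\<bar> < dw1" "\<bar>s\<bar> \<le> e1 / (2 * (K2 + 1))"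
        using sd by (auto simp: d_def)
      have sK2: "\<bar>s\<bar> * K2 \<le> e1 / 2"
      proof -
        have "\<bar>s\<bar> * K2 \<le> e1 / (2 * (K2 + 1)) * K2" using s(4) K2 by (intro mult_right_mono) auto
        also have "\<dots> \<le> e1 / 2" using K2 e1 by (simp add: field_simps)
        finally show ?thesis .
      qed
      define E where "E t = U s t - U 0 t - s *\<^sub>R D t" for t
      have Rb: "norm (a s t (U s t) - a 0 t (U s t) - s *\<^sub>R Gf t) \<le> e1 * \<bar>s\<bar>" if t: "t \<in> {0..1}" for t
      proof -
        let ?r = "s * (1 - t)" and ?Pr = "Pt S v t (s * (1 - t))" and ?P0 = "Pt S v t 0" and ?Us = "U s t" and ?U0 = "U 0 t"
        have r: "\<bar>?r\<bar> \<le> \<bar>s\<bar>" using rs[OF t] .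
        have r\<delta>: "\<bar>?r\<bar> \<le> \<delta>" "\<bar>?r\<bar> \<le> \<eta>T" using r s by auto
        have eq: "a s t ?Us - a 0 t ?Us - s *\<^sub>R Gf t =
            - (G \<Gamma> ?Pr A0 ?Us - G \<Gamma> ?P0 A0 ?Us - ?r *\<^sub>R dG \<Gamma> ?P0 v A0 ?Us)
            - ?r *\<^sub>R dG \<Gamma> ?P0 v A0 (?Us - ?U0)
            + s *\<^sub>R (G \<Gamma> ?Pr v ?Us - G \<Gamma> ?P0 v ?Us)
            + s *\<^sub>R G \<Gamma> ?P0 v (?Us - ?U0)"
          unfolding aP a0P Gf_def
          by (simp add: bilinear_lsub[OF bilinear_G] bilinear_lmul[OF bilinear_G] bilinear_rsub[OF bilinear_G]
              bilinear_rsub[OF bilinear_dG] algebra_simps)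
        have n1: "norm (G \<Gamma> ?Pr A0 ?Us - G \<Gamma> ?P0 A0 ?Us - ?r *\<^sub>R dG \<Gamma> ?P0 v A0 ?Us) \<le> eT * \<bar>s\<bar> * (norm A0 * Ub)"
        proof -
          have "norm (G \<Gamma> ?Pr A0 ?Us - G \<Gamma> ?P0 A0 ?Us - ?r *\<^sub>R dG \<Gamma> ?P0 v A0 ?Us) \<le> eT * \<bar>?r\<bar> * norm A0 * norm ?Us"
            using tayT t r\<delta>(2) by blast
          also have "\<dots> \<le> eT * \<bar>s\<bar> * norm A0 * Ub"
            using eT r Ubnd[OF s(1) t] by (intro mult_mono mult_left_mono mult_right_mono) auto
          finally show ?thesis by (simp add: ac_simps)
        qed
        have n2: "norm (?r *\<^sub>R dG \<Gamma> ?P0 v A0 (?Us - ?U0)) \<le> \<bar>s\<bar> * (\<bar>s\<bar> * (MD * norm A0 * C1))"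
        proof -
          have "norm (?r *\<^sub>R dG \<Gamma> ?P0 v A0 (?Us - ?U0)) \<le> \<bar>?r\<bar> * (MD * norm A0 * norm (?Us - ?U0))"
            using dGb[OF t z, of A0 "?Us - ?U0"] by (simp add: mult_left_mono)
          also have "\<dots> \<le> \<bar>s\<bar> * (MD * norm A0 * (C1 * \<bar>s\<bar>))"
            using r Ulip[OF s(1) t] MD by (intro mult_mono mult_left_mono) auto
          finally show ?thesis by (simp add: ac_simps)
        qed
        have n3: "norm (s *\<^sub>R (G \<Gamma> ?Pr v ?Us - G \<Gamma> ?P0 v ?Us)) \<le> \<bar>s\<bar> * (\<bar>s\<bar> * ((1 + MD) * norm v * Ub))"
        proof -
          have "norm (G \<Gamma> ?Pr v ?Us - G \<Gamma> ?P0 v ?Us) \<le> (1 + MD) * \<bar>?r\<bar> * norm v * norm ?Us"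
            by (rule Glip[OF t r\<delta>(1)])
          also have "\<dots> \<le> (1 + MD) * \<bar>s\<bar> * norm v * Ub"
            using r MD Ubnd[OF s(1) t] by (intro mult_mono mult_left_mono mult_right_mono) auto
          finally have "\<bar>s\<bar> * norm (G \<Gamma> ?Pr v ?Us - G \<Gamma> ?P0 v ?Us) \<le> \<bar>s\<bar> * ((1 + MD) * \<bar>s\<bar> * norm v * Ub)"
            by (rule mult_left_mono) simp
          then show ?thesis by (simp add: ac_simps)
        qed
        have n4: "norm (s *\<^sub>R G \<Gamma> ?P0 v (?Us - ?U0)) \<le> \<bar>s\<bar> * (\<bar>s\<bar> * (MG * norm v * C1))"
        proof -
          have "norm (G \<Gamma> ?P0 v (?Us - ?U0)) \<le> MG * norm v * norm (?Us - ?U0)" using Gb[OF t z] .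
          also have "\<dots> \<le> MG * norm v * (C1 * \<bar>s\<bar>)" using Ulip[OF s(1) t] MG by (intro mult_left_mono) auto
          finally have "\<bar>s\<bar> * norm (G \<Gamma> ?P0 v (?Us - ?U0)) \<le> \<bar>s\<bar> * (MG * norm v * (C1 * \<bar>s\<bar>))"
            by (rule mult_left_mono) simp
          then show ?thesis by (simp add: ac_simps)
        qed
        have "norm (a s t ?Us - a 0 t ?Us - s *\<^sub>R Gf t) \<le>
            eT * \<bar>s\<bar> * (norm A0 * Ub) + \<bar>s\<bar> * (\<bar>s\<bar> * (MD * norm A0 * C1)) + \<bar>s\<bar> * (\<bar>s\<bar> * ((1 + MD) * norm v * Ub))
            + \<bar>s\<bar> * (\<bar>s\<bar> * (MG * norm v * C1))"
          unfolding eq using n1 n2 n3 n4 norm_triangle_ineq norm_triangle_ineq4 norm_minus_cancel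
          by (smt (verit))
        also have "\<dots> = \<bar>s\<bar> * (eT * (norm A0 * Ub)) + \<bar>s\<bar> * (\<bar>s\<bar> * K2)"
          by (simp add: K2_def algebra_simps)
        also have "\<dots> \<le> \<bar>s\<bar> * (e1 / 2) + \<bar>s\<bar> * (e1 / 2)"
          using eTb sK2 by (intro add_mono mult_left_mono) auto
        also have "\<dots> = e1 * \<bar>s\<bar>" by simp
        finally show ?thesis .
      qed
      have "norm (E 1) \<le> (norm (E 0) + e1 * \<bar>s\<bar>) * exp (Ma + 1)"
      proof (rule energy[where E'="\<lambda>t. a s t (U s t) - a 0 t (U 0 t) - s *\<^sub>R (a 0 t (D t) + Gf t)", OF _ _ Ma0])
        show "(E has_vector_derivative a s t (U s t) - a 0 t (U 0 t) - s *\<^sub>R (a 0 t (D t) + Gf t)) (at t within {0..1})"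
          if t: "t \<in> {0..1}" for t
          unfolding E_def[abs_def]
          by (intro has_vector_derivative_diff Ud s(1) z t bounded_linear.has_vector_derivative[OF bounded_linear_scaleR_right Dd])
        fix t :: real assume t: "t \<in> {0..1}"
        have "a s t (U s t) - a 0 t (U 0 t) - s *\<^sub>R (a 0 t (D t) + Gf t) = a 0 t (E t) + (a s t (U s t) - a 0 t (U s t) - s *\<^sub>R Gf t)"
          unfolding E_def by (simp add: linear_diff[OF alin] linear_add[OF alin] linear_scale[OF alin] algebra_simps)
        then have "norm (a s t (U s t) - a 0 t (U 0 t) - s *\<^sub>R (a 0 t (D t) + Gf t)) \<le> norm (a 0 t (E t)) + norm (a s t (U s t) - a 0 t (U s t) - s *\<^sub>R Gf t)"
          by (metis norm_triangle_ineq)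
        also have "\<dots> \<le> Ma * norm (E t) + e1 * \<bar>s\<bar>" using Mab[OF z t] Rb[OF t] by (intro add_mono) auto
        finally show "norm (a s t (U s t) - a 0 t (U 0 t) - s *\<^sub>R (a 0 t (D t) + Gf t)) \<le> Ma * norm (E t) + e1 * \<bar>s\<bar>" .
      qed (use e1 in auto)
      also have "\<dots> \<le> (e1 * \<bar>s\<bar> + e1 * \<bar>s\<bar>) * exp (Ma + 1)"
      proof -
        have "E 0 = w s - w 0 - s *\<^sub>R w'" unfolding E_def D0 using U0[OF s(1)] U0[OF z] by simp
        then have "norm (E 0) \<le> e1 * \<bar>s\<bar>" using dw1(2)[OF s(3)] by simp
        then show ?thesis by (intro mult_right_mono add_right_mono) auto
      qed
      also have "\<dots> = e * \<bar>s\<bar>" using K0 by (simp add: e1_def K0_def field_simps)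
      finally show "norm (U s 1 - U 0 1 - s *\<^sub>R D 1) \<le> e * \<bar>s\<bar>" by (simp add: E_def)
    qed
  qed
  show ?thesis
    unfolding has_vector_derivative_def has_derivative_at_alt Dval
  proof (intro conjI allI impI bounded_linear_scaleR_left)
    fix e :: real assume e: "e > 0"
    obtain d where d: "d > 0" and dm: "\<And>s. \<bar>s\<bar> < d \<Longrightarrow> norm (U s 1 - U 0 1 - s *\<^sub>R D 1) \<le> e * \<bar>s\<bar>"
      using main[OF e] by blast
    show "\<exists>d>0. \<forall>y. norm (y - 0) < d \<longrightarrow> norm (ptrans_to_id \<Gamma> (S + y *\<^sub>R v) (w y) - ptrans_to_id \<Gamma> (S + 0 *\<^sub>R v) (w 0) - (y - 0) *\<^sub>R D 1) \<le> e * norm (y - 0)"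
    proof (intro exI[of _ "min d \<delta>"] conjI allI impI)
      show "min d \<delta> > 0" using d \<delta> by simp
      fix y :: real assume "norm (y - 0) < min d \<delta>"
      then have y: "\<bar>y\<bar> < d" "\<bar>y\<bar> \<le> \<delta>" by auto
      show "norm (ptrans_to_id \<Gamma> (S + y *\<^sub>R v) (w y) - ptrans_to_id \<Gamma> (S + 0 *\<^sub>R v) (w 0) - (y - 0) *\<^sub>R D 1) \<le> e * norm (y - 0)"
        using dm[OF y(1)] Uptr[OF y(2)] Uptr[OF z] by simp
    qed
  qed
qed



lemma trace_mult_expand: "trace (A ** B) = (\<Sum>i\<in>UNIV. \<Sum>k\<in>UNIV. A $ i $ k * B $ k $ (i::'n::finite))"
  by (simp add: trace_def matrix_matrix_mult_def)

lemma bb_trace: "bounded_bilinear (\<lambda>A B :: real^'n::finite^'n. trace (A ** B))"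
proof -
  have "bilinear (\<lambda>A B :: real^'n^'n. trace (A ** B))"
    unfolding bilinear_def
  proof (intro conjI allI)
    fix A :: "real^'n^'n"
    show "linear (\<lambda>B. trace (A ** B))"
      by (rule linearI) (simp_all add: trace_mult_expand algebra_simps sum.distrib sum_distrib_left)
  next
    fix B :: "real^'n^'n"
    show "linear (\<lambda>A. trace (A ** B))"
      by (rule linearI) (simp_all add: trace_mult_expand algebra_simps sum.distrib sum_distrib_left)
  qed
  then show ?thesis by (simp add: bilinear_conv_bounded_bilinear)
qed

lemma vfield_line:
  assumes Y: "vfield Y" and S: "S \<in> SPD" and v: "v \<in> Sym"
  shows "((\<lambda>s. Y (S + s *\<^sub>R v)) has_vector_derivative dd Y S v) (at 0)"
proof -
  have "(\<lambda>s. Y (S + s *\<^sub>R v)) differentiable (at 0)"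
  proof -
    have sm: "smooth_SPD Y" using Y by (simp add: vfield_def)
    show ?thesis using sm S v unfolding smooth_SPD_def by (erule_tac x="[]" in allE) simp
  qed
  then show ?thesis unfolding dd_def by (simp add: vector_derivative_works)
qed

lemma vfield_line_Sym:
  assumes Y: "vfield Y" and S: "S \<in> SPD" and v: "v \<in> Sym"
  shows "\<exists>e>0. \<forall>s. \<bar>s\<bar> < e \<longrightarrow> Y (S + s *\<^sub>R v) \<in> Sym"
  using SPD_line[OF S v] Y unfolding vfield_def by blast

theorem theorem2:
  fixes g gs :: "'n::finite mat \<Rightarrow> 'n mat \<Rightarrow> 'n mat \<Rightarrow> real"
    and \<Gamma> \<Gamma>s :: "'n mat \<Rightarrow> 'n mat \<Rightarrow> 'n mat \<Rightarrow> 'n mat"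
  assumes "flat_metric g" and "flat_metric gs"
    and "levi_civita g \<Gamma>" and "levi_civita gs \<Gamma>s"
    and "\<forall>S\<in>SPD. \<forall>X\<in>Sym. \<forall>Y\<in>Sym. balanced \<Gamma> \<Gamma>s S X Y = balanced \<Gamma> \<Gamma>s S Y X"
    and "\<forall>S\<in>SPD. \<forall>X\<in>Sym. X \<noteq> 0 \<longrightarrow> balanced \<Gamma> \<Gamma>s S X X > 0"
  shows "dually_flat (balanced \<Gamma> \<Gamma>s) \<Gamma> \<Gamma>s"
proof -
  have fl: "flat \<Gamma>" using assms(1,3) unfolding flat_metric_def by blast
  have fls: "flat \<Gamma>s" using assms(2,4) unfolding flat_metric_def by blast
  have conn: "connection \<Gamma>" and cf: "curvature_free \<Gamma>" using fl by (auto simp: flat_def)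
  have conns: "connection \<Gamma>s" and cfs: "curvature_free \<Gamma>s" using fls by (auto simp: flat_def)
  have "dual (balanced \<Gamma> \<Gamma>s) \<Gamma> \<Gamma>s"
    unfolding dual_def
  proof (intro allI impI ballI)
    fix X Y Z :: "'n mat \<Rightarrow> 'n mat" and S :: "'n mat"
    assume vf: "vfield X \<and> vfield Y \<and> vfield Z" and S: "S \<in> SPD"
    define v where "v = X S"
    have v: "v \<in> Sym" using vf S unfolding vfield_def v_def by blast
    obtain e1 where e1: "e1 > 0" "\<And>s. \<bar>s\<bar> < e1 \<Longrightarrow> Y (S + s *\<^sub>R v) \<in> Sym"
      using vfield_line_Sym[OF _ S v, of Y] vf by blast
    obtain e2 where e2: "e2 > 0" "\<And>s. \<bar>s\<bar> < e2 \<Longrightarrow> Z (S + s *\<^sub>R v) \<in> Sym"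
      using vfield_line_Sym[OF _ S v, of Z] vf by blast
    have d1: "((\<lambda>s. ptrans_to_id \<Gamma> (S + s *\<^sub>R v) (Y (S + s *\<^sub>R v))) has_vector_derivative
        ptrans_to_id \<Gamma> S (dd Y S v + \<Gamma> S v (Y S))) (at 0)"
      using ptrans_deriv[OF conn cf S v e1(1), of "\<lambda>s. Y (S + s *\<^sub>R v)", OF e1(2) vfield_line[OF _ S v, of Y]] vf
      by simp
    have d2: "((\<lambda>s. ptrans_to_id \<Gamma>s (S + s *\<^sub>R v) (Z (S + s *\<^sub>R v))) has_vector_derivative
        ptrans_to_id \<Gamma>s S (dd Z S v + \<Gamma>s S v (Z S))) (at 0)"
      using ptrans_deriv[OF conns cfs S v e2(1), of "\<lambda>s. Z (S + s *\<^sub>R v)", OF e2(2) vfield_line[OF _ S v, of Z]] vf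
      by simp
    have "((\<lambda>s. balanced \<Gamma> \<Gamma>s (S + s *\<^sub>R v) (Y (S + s *\<^sub>R v)) (Z (S + s *\<^sub>R v))) has_vector_derivative
        trace (ptrans_to_id \<Gamma> S (Y S) ** ptrans_to_id \<Gamma>s S (dd Z S v + \<Gamma>s S v (Z S)))
        + trace (ptrans_to_id \<Gamma> S (dd Y S v + \<Gamma> S v (Y S)) ** ptrans_to_id \<Gamma>s S (Z S))) (at 0)"
      unfolding balanced_def using bounded_bilinear.has_vector_derivative[OF bb_trace d1 d2] by simp
    then show "dd (\<lambda>T. balanced \<Gamma> \<Gamma>s T (Y T) (Z T)) S (X S) =
        balanced \<Gamma> \<Gamma>s S (cov \<Gamma> X Y S) (Z S) + balanced \<Gamma> \<Gamma>s S (Y S) (cov \<Gamma>s X Z S)"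
      unfolding dd_def[of "\<lambda>T. balanced \<Gamma> \<Gamma>s T (Y T) (Z T)"] v_def[symmetric]
      by (simp add: vector_derivative_at cov_def balanced_def v_def add.commute)
  qed
  then show ?thesis using fl by (simp add: dually_flat_def)
qed


end
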